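(* Consider the setting described in the context. Assume (C1), (C2), (C3), that $X$ and $XY^{(\ell)}$, $\ell=1,\dots,k$, have finite second-order moments, and that ${\rm var}(X\mid Z=z)$ is positive definite for every $z\in\mathcal Z$. Then for every $z\in\mathcal Z$ and every $t\in\{1,\dots,k\}$, $\widehat\beta_t(z)=\beta_t(z)+o_p(1)$ and $\widehat\beta(z)=\beta(z)+o_p(1)$ as $n\to\infty$, where $\beta_t(z)=\{{\rm var}(X\mid Z=z)\}^{-1}{\rm cov}(X,Y^{(t)}\mid Z=z)$ and $\beta(z)=\sum_{\ell=1}^k\pi_\ell\beta_\ell(z)$.
   Context: Setting: a trial compares $k\ge2$ treatments (fixed) with known assignment proportions $\pi_1,\dots,\pi_k\in(0,1)$, $\sum_t\pi_t=1$. Let $e_t$ be the $t$-th unit vector in $\mathbb R^k$. For patient $i=1,\dots,n$: $I_i\in\{e_1,\dots,e_k\}$ is the treatment indicator, $Y_i^{(1)},\dots,Y_i^{(k)}$ are potential responses, $W_i$ the observed covariate vector, $Z_i$ a discrete function of $W_i$ used in randomization, $X_i$ a vector-valued function of $W_i$. Observed $Y_i=Y_i^{(t)}$ iff $I_i=e_t$. Generic variables $(Y^{(1)},\dots,Y^{(k)},W)$, $Z$, $X$. Conditions: (C1) $(Y_i^{(1)},\dots,Y_i^{(k)},W_i)$, $i=1,\dots,n$, are i.i.d. as $(Y^{(1)},\dots,Y^{(k)},W)$, each $Y^{(t)}$ with finite second moments. (C2) $(I_1,\dots,I_n)$ and $\{(Y_i^{(1)},\dots,Y_i^{(k)},W_i)\}_{i}$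 are conditionally independent given $Z_1,\dots,Z_n$. (C3) $Z$ takes finitely many values in $\mathcal Z$; ${\rm pr}(I_i=e_t\mid Z_1,\dots,Z_n)=\pi_t$ for all $t,i$; and for every $z\in\mathcal Z$ and $t$, $D_t(z)/n(z)\to0$ in probability, where $n(z)=\#\{i:Z_i=z\}$, $n_t(z)=\#\{i:Z_i=z,I_i=e_t\}$, $D_t(z)=n_t(z)-\pi_tn(z)$. Estimators: $\bar X_t(z)$ is the sample mean of $X_i$ over $\{i:I_i=e_t,Z_i=z\}$; $\widehat\beta_t(z)=\big[\sum_{i:I_i=e_t,Z_i=z}\{X_i-\bar X_t(z)\}\{X_i-\bar X_t(z)\}^T\big]^{-1}\sum_{i:I_i=e_t,Z_i=z}\{X_i-\bar X_t(z)\}Y_i$; $\widehat\beta(z)=\big[\sum_{\ell=1}^k\sum_{i:I_i=e_\ell,Z_i=z}\{X_i-\bar X_\ell(z)\}\{X_i-\bar X_\ell(z)\}^T\big]^{-1}\sum_{\ell=1}^k\sum_{i:I_i=e_\ell,Z_i=z}\{X_i-\bar X_\ell(z)\}Y_i$. *)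

theory Defs
  imports "HOL-Probability.Probability"
begin

definition outer :: "real^'p \<Rightarrow> real^'p \<Rightarrow> real^'p^'p" where
  "outer x y = (\<chi> i j. x $ i * y $ j)"

(* Matrix inverse; when the matrix is singular the estimator is undefined in the
   paper, here we use the convention 0. *)
definition inv0 :: "real^'p^'p \<Rightarrow> real^'p^'p" where
  "inv0 A = (if invertible A then matrix_inv A else 0)"

definition posdef :: "real^'p^'p \<Rightarrow> bool" where
  "posdef A \<longleftrightarrow> (\<forall>v. v \<noteq> 0 \<longrightarrow> v \<bullet> (A *v v) > 0)"

definition conv_in_prob ::
  "'a measure \<Rightarrow> (nat \<Rightarrow> 'a \<Rightarrow> 'b::metric_space) \<Rightarrow> 'b \<Rightarrow> bool" where
  "conv_in_prob M f c \<longleftrightarrow> (\<forall>n. f n \<in> borel_measurable M) \<and>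
     (\<forall>e>0. (\<lambda>n. measure M {\<omega> \<in> space M. dist (f n \<omega>) c > e}) \<longlonglongrightarrow> 0)"

definition cond_indep_disc ::
  "'a measure \<Rightarrow> ('a \<Rightarrow> 'b) \<Rightarrow> 'b measure \<Rightarrow> ('a \<Rightarrow> 'c) \<Rightarrow> 'c measure \<Rightarrow> ('a \<Rightarrow> 'd) \<Rightarrow> bool" where
  "cond_indep_disc M X MX Y MY Z \<longleftrightarrow>
     (\<forall>A\<in>sets MX. \<forall>B\<in>sets MY. \<forall>z.
        measure M {\<omega>\<in>space M. X \<omega> \<in> A \<and> Y \<omega> \<in> B \<and> Z \<omega> = z} * measure M {\<omega>\<in>space M. Z \<omega> = z}
      = measure M {\<omega>\<in>space M. X \<omega> \<in> A \<and> Z \<omega> = z} * measure M {\<omega>\<in>space M. Y \<omega> \<in> B \<and> Z \<omega> = z})"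

definition cond_mean :: "'a measure \<Rightarrow> ('a \<Rightarrow> 'b::{banach,second_countable_topology}) \<Rightarrow> ('a \<Rightarrow> 'z) \<Rightarrow> 'z \<Rightarrow> 'b" where
  "cond_mean M V Z z =
     (1 / measure M {\<omega>\<in>space M. Z \<omega> = z}) *\<^sub>R
       (LINT \<omega>|M. indicator {\<omega>\<in>space M. Z \<omega> = z} \<omega> *\<^sub>R V \<omega>)"

definition cond_var :: "'a measure \<Rightarrow> ('a \<Rightarrow> real^'p) \<Rightarrow> ('a \<Rightarrow> 'z) \<Rightarrow> 'z \<Rightarrow> real^'p^'p" where
  "cond_var M X Z z = cond_mean M (\<lambda>\<omega>. outer (X \<omega> - cond_mean M X Z z) (X \<omega> - cond_mean M X Z z)) Z z"

definition cond_cov :: "'a measure \<Rightarrow> ('a \<Rightarrow> real^'p) \<Rightarrow> ('a \<Rightarrow> real) \<Rightarrow> ('a \<Rightarrow> 'z) \<Rightarrow> 'z \<Rightarrow> real^'p" where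
  "cond_cov M X Y Z z = cond_mean M (\<lambda>\<omega>. (Y \<omega> - cond_mean M Y Z z) *\<^sub>R (X \<omega> - cond_mean M X Z z)) Z z"

(* Sample: the patients i < n with I_i = e_t and Z_i = z *)
definition samp :: "(nat \<Rightarrow> 'k) \<Rightarrow> (nat \<Rightarrow> 'z) \<Rightarrow> nat \<Rightarrow> 'k \<Rightarrow> 'z \<Rightarrow> nat set" where
  "samp I Z n t z = {i. i < n \<and> I i = t \<and> Z i = z}"

definition xbar :: "(nat \<Rightarrow> real^'p) \<Rightarrow> nat set \<Rightarrow> real^'p" where
  "xbar X S = (1 / real (card S)) *\<^sub>R (\<Sum>i\<in>S. X i)"

definition Sxx :: "(nat \<Rightarrow> real^'p) \<Rightarrow> nat set \<Rightarrow> real^'p^'p" where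
  "Sxx X S = (\<Sum>i\<in>S. outer (X i - xbar X S) (X i - xbar X S))"

definition Sxy :: "(nat \<Rightarrow> real^'p) \<Rightarrow> (nat \<Rightarrow> real) \<Rightarrow> nat set \<Rightarrow> real^'p" where
  "Sxy X Y S = (\<Sum>i\<in>S. Y i *\<^sub>R (X i - xbar X S))"

definition betahat_t :: "(nat \<Rightarrow> 'k) \<Rightarrow> (nat \<Rightarrow> 'z) \<Rightarrow> (nat \<Rightarrow> real^'p) \<Rightarrow> (nat \<Rightarrow> real)
    \<Rightarrow> nat \<Rightarrow> 'k \<Rightarrow> 'z \<Rightarrow> real^'p" where
  "betahat_t I Z X Y n t z =
     inv0 (Sxx X (samp I Z n t z)) *v Sxy X Y (samp I Z n t z)"

definition betahat :: "(nat \<Rightarrow> 'k::finite) \<Rightarrow> (nat \<Rightarrow> 'z) \<Rightarrow> (nat \<Rightarrow> real^'p) \<Rightarrow> (nat \<Rightarrow> real)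
    \<Rightarrow> nat \<Rightarrow> 'z \<Rightarrow> real^'p" where
  "betahat I Z X Y n z =
     inv0 (\<Sum>l\<in>UNIV. Sxx X (samp I Z n l z)) *v (\<Sum>l\<in>UNIV. Sxy X Y (samp I Z n l z))"

end

theory Submission
  imports Defs
begin

lemma dist_const_meas[measurable (raw)]:
  fixes f :: "'a \<Rightarrow> 'b::metric_space"
  assumes "f \<in> borel_measurable M"
  shows "(\<lambda>w. dist (f w) c) \<in> borel_measurable M"
proof -
  have "(\<lambda>x. dist x c) \<in> borel_measurable borel"
    by (intro borel_measurable_continuous_onI continuous_intros)
  from measurable_compose[OF assms this] show ?thesis by simp
qed

lemma cip_cong:
  assumes "\<And>n \<omega>. \<omega> \<in> space M \<Longrightarrow> f n \<omega> = g n \<omega>"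
  shows "conv_in_prob M f c \<longleftrightarrow> conv_in_prob M g c"
proof -
  have "\<And>n. f n \<in> borel_measurable M \<longleftrightarrow> g n \<in> borel_measurable M"
    using assms by (intro measurable_cong) auto
  moreover have "\<And>n e. {\<omega> \<in> space M. dist (f n \<omega>) c > e} = {\<omega> \<in> space M. dist (g n \<omega>) c > e}"
    using assms by auto
  ultimately show ?thesis unfolding conv_in_prob_def by simp
qed

lemma cip_const:
  assumes "finite_measure M"
  shows "conv_in_prob M (\<lambda>n \<omega>. c) c"
  unfolding conv_in_prob_def by simp

lemma tendsto_zero_by_eps:
  fixes a :: "nat \<Rightarrow> real"
  assumes "\<And>n. 0 \<le> a n" "\<And>\<eta>. \<eta> > 0 \<Longrightarrow> eventually (\<lambda>n. a n \<le> \<eta>) sequentially"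
  shows "a \<longlonglongrightarrow> 0"
proof (rule tendstoI)
  fix e :: real assume "e > 0"
  have "eventually (\<lambda>n. a n \<le> e/2) sequentially" by (rule assms(2)) (use \<open>e>0\<close> in simp)
  then show "eventually (\<lambda>n. dist (a n) 0 < e) sequentially"
    by eventually_elim (use assms(1) \<open>e>0\<close> in auto)
qed

lemma cip_cmt:
  fixes f :: "nat \<Rightarrow> 'a \<Rightarrow> 'b::metric_space" and h :: "'b \<Rightarrow> 'c::metric_space"
  assumes P: "finite_measure M" and cf: "conv_in_prob M f c" and hc: "isCont h c"
    and hm: "\<And>n. (\<lambda>\<omega>. h (f n \<omega>)) \<in> borel_measurable M"
  shows "conv_in_prob M (\<lambda>n \<omega>. h (f n \<omega>)) (h c)"
  unfolding conv_in_prob_def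
proof (intro conjI allI impI hm)
  interpret finite_measure M by fact
  fix e :: real assume "e > 0"
  obtain d where d: "d > 0" "\<And>x. dist x c < d \<Longrightarrow> dist (h x) (h c) < e"
    using hc \<open>e>0\<close> unfolding continuous_at_eps_delta by blast
  have fm[measurable]: "\<And>n. f n \<in> borel_measurable M" using cf unfolding conv_in_prob_def by auto
  have lim: "(\<lambda>n. measure M {\<omega> \<in> space M. dist (f n \<omega>) c > d/2}) \<longlonglongrightarrow> 0"
    using cf d(1) unfolding conv_in_prob_def by (auto dest!: spec[of _ "d/2"])
  show "(\<lambda>n. measure M {\<omega> \<in> space M. dist (h (f n \<omega>)) (h c) > e}) \<longlonglongrightarrow> 0"
  proof (rule tendsto_sandwich[OF _ _ tendsto_const lim])
    show "\<forall>\<^sub>F n in sequentially. 0 \<le> measure M {\<omega> \<in> space M. e < dist (h (f n \<omega>)) (h c)}" by simp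
    show "\<forall>\<^sub>F n in sequentially. measure M {\<omega> \<in> space M. e < dist (h (f n \<omega>)) (h c)}
        \<le> measure M {\<omega> \<in> space M. d / 2 < dist (f n \<omega>) c}"
    proof (intro always_eventually allI finite_measure_mono)
      fix n
      show "{\<omega> \<in> space M. e < dist (h (f n \<omega>)) (h c)} \<subseteq> {\<omega> \<in> space M. d / 2 < dist (f n \<omega>) c}"
      proof safe
        fix \<omega> assume a: "\<omega> \<in> space M" "e < dist (h (f n \<omega>)) (h c)"
        show "d / 2 < dist (f n \<omega>) c"
        proof (rule ccontr)
          assume "\<not> d / 2 < dist (f n \<omega>) c"
          then have "dist (f n \<omega>) c < d" using d(1) by simp
          then have "dist (h (f n \<omega>)) (h c) < e" by (rule d(2))
          with a show False by simp
        qed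
      qed
      show "{\<omega> \<in> space M. d / 2 < dist (f n \<omega>) c} \<in> sets M" by measurable
    qed
  qed
qed

lemma cip_vec:
  fixes f :: "nat \<Rightarrow> 'a \<Rightarrow> 'b::metric_space^'i"
  assumes P: "finite_measure M" and fm: "\<And>n. f n \<in> borel_measurable M"
    and comp: "\<And>a. conv_in_prob M (\<lambda>n \<omega>. f n \<omega> $ a) (c $ a)"
  shows "conv_in_prob M f c"
  unfolding conv_in_prob_def
proof (intro conjI allI impI fm)
  interpret finite_measure M by fact
  fix e :: real assume "e > 0"
  define e' where "e' = e / real CARD('i)"
  have e': "e' > 0" using \<open>e>0\<close> by (simp add: e'_def)
  have cm[measurable]: "\<And>n a. (\<lambda>\<omega>. f n \<omega> $ a) \<in> borel_measurable M"
    using comp unfolding conv_in_prob_def by blast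
  have lim: "\<And>a. (\<lambda>n. measure M {\<omega> \<in> space M. dist (f n \<omega> $ a) (c $ a) > e'}) \<longlonglongrightarrow> 0"
    using comp e' unfolding conv_in_prob_def by blast
  have sub: "{\<omega> \<in> space M. dist (f n \<omega>) c > e} \<subseteq> (\<Union>a\<in>UNIV. {\<omega> \<in> space M. dist (f n \<omega> $ a) (c $ a) > e'})" for n
  proof safe
    fix \<omega> assume a: "\<omega> \<in> space M" "e < dist (f n \<omega>) c"
    show "\<omega> \<in> (\<Union>a. {\<omega> \<in> space M. e' < dist (f n \<omega> $ a) (c $ a)})"
    proof (rule ccontr)
      assume "\<omega> \<notin> (\<Union>a. {\<omega> \<in> space M. e' < dist (f n \<omega> $ a) (c $ a)})"
      then have le: "\<And>a. dist (f n \<omega> $ a) (c $ a) \<le> e'" using a(1) by (auto simp: not_less)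
      have "dist (f n \<omega>) c \<le> (\<Sum>a\<in>UNIV. dist (f n \<omega> $ a) (c $ a))"
        unfolding dist_vec_def by (rule L2_set_le_sum) simp
      also have "\<dots> \<le> (\<Sum>a\<in>(UNIV::'i set). e')" by (rule sum_mono) (rule le)
      also have "\<dots> = e" by (simp add: e'_def)
      finally show False using a(2) by simp
    qed
  qed
  show "(\<lambda>n. measure M {\<omega> \<in> space M. dist (f n \<omega>) c > e}) \<longlonglongrightarrow> 0"
  proof (rule tendsto_sandwich[OF _ _ tendsto_const])
    show "\<forall>\<^sub>F n in sequentially. 0 \<le> measure M {\<omega> \<in> space M. e < dist (f n \<omega>) c}" by simp
    show "\<forall>\<^sub>F n in sequentially. measure M {\<omega> \<in> space M. e < dist (f n \<omega>) c}
        \<le> (\<Sum>a\<in>UNIV. measure M {\<omega> \<in> space M. dist (f n \<omega> $ a) (c $ a) > e'})"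
    proof (intro always_eventually allI)
      fix n
      have "measure M {\<omega> \<in> space M. e < dist (f n \<omega>) c}
          \<le> measure M (\<Union>a\<in>UNIV. {\<omega> \<in> space M. dist (f n \<omega> $ a) (c $ a) > e'})"
        by (rule finite_measure_mono[OF sub]) measurable
      also have "\<dots> \<le> (\<Sum>a\<in>UNIV. measure M {\<omega> \<in> space M. dist (f n \<omega> $ a) (c $ a) > e'})"
        by (rule measure_UNION_le) auto
      finally show "measure M {\<omega> \<in> space M. e < dist (f n \<omega>) c}
        \<le> (\<Sum>a\<in>UNIV. measure M {\<omega> \<in> space M. dist (f n \<omega> $ a) (c $ a) > e'})" .
    qed
    show "(\<lambda>n. \<Sum>a\<in>UNIV. measure M {\<omega> \<in> space M. dist (f n \<omega> $ a) (c $ a) > e'}) \<longlonglongrightarrow> 0"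
      by (rule tendsto_null_sum) (rule lim)
  qed
qed

lemma cip_pair:
  fixes f :: "nat \<Rightarrow> 'a \<Rightarrow> 'b::{metric_space,second_countable_topology}"
    and g :: "nat \<Rightarrow> 'a \<Rightarrow> 'c::{metric_space,second_countable_topology}"
  assumes P: "finite_measure M" and cf: "conv_in_prob M f c" and cg: "conv_in_prob M g d"
  shows "conv_in_prob M (\<lambda>n \<omega>. (f n \<omega>, g n \<omega>)) (c, d)"
  unfolding conv_in_prob_def
proof (intro conjI allI impI)
  interpret finite_measure M by fact
  have fm[measurable]: "\<And>n. f n \<in> borel_measurable M" using cf unfolding conv_in_prob_def by auto
  have gm[measurable]: "\<And>n. g n \<in> borel_measurable M" using cg unfolding conv_in_prob_def by auto
  show "\<And>n. (\<lambda>\<omega>. (f n \<omega>, g n \<omega>)) \<in> borel_measurable M" by measurable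
  fix e :: real assume "e > 0"
  have lim1: "(\<lambda>n. measure M {\<omega> \<in> space M. dist (f n \<omega>) c > e/2}) \<longlonglongrightarrow> 0"
    using cf \<open>e>0\<close> unfolding conv_in_prob_def by (auto dest!: spec[of _ "e/2"])
  have lim2: "(\<lambda>n. measure M {\<omega> \<in> space M. dist (g n \<omega>) d > e/2}) \<longlonglongrightarrow> 0"
    using cg \<open>e>0\<close> unfolding conv_in_prob_def by (auto dest!: spec[of _ "e/2"])
  have sub: "{\<omega> \<in> space M. dist (f n \<omega>, g n \<omega>) (c, d) > e} \<subseteq>
     {\<omega> \<in> space M. dist (f n \<omega>) c > e/2} \<union> {\<omega> \<in> space M. dist (g n \<omega>) d > e/2}" for n
  proof safe
    fix \<omega> assume a: "\<omega> \<in> space M" "e < dist (f n \<omega>, g n \<omega>) (c, d)" "\<not> e / 2 < dist (g n \<omega>) d"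
    have "dist (f n \<omega>, g n \<omega>) (c, d) \<le> dist (f n \<omega>) c + dist (g n \<omega>) d"
      unfolding dist_Pair_Pair by (rule sqrt_sum_squares_le_sum) auto
    then show "e / 2 < dist (f n \<omega>) c" using a by simp
  qed
  show "(\<lambda>n. measure M {\<omega> \<in> space M. dist (f n \<omega>, g n \<omega>) (c, d) > e}) \<longlonglongrightarrow> 0"
  proof (rule tendsto_sandwich[OF _ _ tendsto_const tendsto_add_zero[OF lim1 lim2]])
    show "\<forall>\<^sub>F n in sequentially. 0 \<le> measure M {\<omega> \<in> space M. e < dist (f n \<omega>, g n \<omega>) (c, d)}" by simp
    show "\<forall>\<^sub>F n in sequentially. measure M {\<omega> \<in> space M. e < dist (f n \<omega>, g n \<omega>) (c, d)}
        \<le> measure M {\<omega> \<in> space M. dist (f n \<omega>) c > e/2} + measure M {\<omega> \<in> space M. dist (g n \<omega>) d > e/2}"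
    proof (intro always_eventually allI)
      fix n
      have "measure M {\<omega> \<in> space M. e < dist (f n \<omega>, g n \<omega>) (c, d)}
        \<le> measure M ({\<omega> \<in> space M. dist (f n \<omega>) c > e/2} \<union> {\<omega> \<in> space M. dist (g n \<omega>) d > e/2})"
        by (rule finite_measure_mono[OF sub]) measurable
      also have "\<dots> \<le> measure M {\<omega> \<in> space M. dist (f n \<omega>) c > e/2} + measure M {\<omega> \<in> space M. dist (g n \<omega>) d > e/2}"
        by (rule measure_Un_le) measurable
      finally show "measure M {\<omega> \<in> space M. e < dist (f n \<omega>, g n \<omega>) (c, d)}
        \<le> measure M {\<omega> \<in> space M. dist (f n \<omega>) c > e/2} + measure M {\<omega> \<in> space M. dist (g n \<omega>) d > e/2}" .
    qed
  qed
qed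


lemma det_tendsto[tendsto_intros]:
  fixes f :: "'a \<Rightarrow> real^'n^'n"
  assumes "(f \<longlongrightarrow> A) F"
  shows "((\<lambda>x. det (f x)) \<longlongrightarrow> det A) F"
  unfolding det_def by (intro tendsto_intros assms)

lemma isCont_det: "isCont (det :: real^'n^'n \<Rightarrow> real) A"
  unfolding isCont_def by (intro tendsto_intros tendsto_ident_at)

lemma det_meas[measurable]: "(det :: real^'n^'n \<Rightarrow> real) \<in> borel_measurable borel"
  by (intro borel_measurable_continuous_onI continuous_at_imp_continuous_on ballI isCont_det)

definition cramer_col :: "real^'n^'n \<Rightarrow> real^'n \<Rightarrow> 'n \<Rightarrow> real^'n^'n" where
  "cramer_col A b k = (\<chi> i j. if j = k then b $ i else A $ i $ j)"

lemma cramer_col_tendsto[tendsto_intros]: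
  assumes "(f \<longlongrightarrow> A) F" "(g \<longlongrightarrow> b) F"
  shows "((\<lambda>x. cramer_col (f x) (g x) k) \<longlongrightarrow> cramer_col A b k) F"
  unfolding cramer_col_def
proof (intro tendsto_vec_lambda)
  fix i j show "((\<lambda>x. if j = k then g x $ i else f x $ i $ j) \<longlongrightarrow> (if j = k then b $ i else A $ i $ j)) F"
    by (cases "j = k") (auto intro!: tendsto_intros assms)
qed

lemma inv0_cramer:
  "inv0 A *v b = (\<chi> k. det (cramer_col A b k) / det A)"
proof (cases "det A = 0")
  case True
  then have "\<not> invertible A" using invertible_det_nz by blast
  then show ?thesis using True by (simp add: inv0_def vec_eq_iff)
next
  case False
  then have inv: "invertible A" using invertible_det_nz by blast
  then have "\<exists>A'. A ** A' = mat 1 \<and> A' ** A = mat 1" unfolding invertible_def .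
  then have ai: "A ** matrix_inv A = mat 1" unfolding matrix_inv_def by (rule someI_ex[THEN conjunct1])
  have "A *v (matrix_inv A *v b) = b" by (simp add: matrix_vector_mul_assoc ai)
  then have "matrix_inv A *v b = (\<chi> k. det (\<chi> i j. if j=k then b$i else A$i$j) / det A)"
    using cramer[OF False] by blast
  then show ?thesis using inv by (simp add: inv0_def cramer_col_def)
qed

lemma inv0_tendsto:
  assumes "(f \<longlongrightarrow> A) F" "(g \<longlongrightarrow> b) F" "det A \<noteq> 0"
  shows "((\<lambda>x. inv0 (f x) *v g x) \<longlongrightarrow> inv0 A *v b) F"
  unfolding inv0_cramer using assms by (intro tendsto_intros) auto

lemma isCont_inv0: "det A \<noteq> 0 \<Longrightarrow> isCont (\<lambda>p. inv0 (fst p) *v snd p) (A, b)"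
  unfolding isCont_def by (intro inv0_tendsto tendsto_intros tendsto_ident_at) auto

lemma meas_vec:
  fixes f :: "'a \<Rightarrow> 'b::euclidean_space^'i"
  assumes "\<And>a. (\<lambda>x. f x $ a) \<in> borel_measurable M"
  shows "f \<in> borel_measurable M"
proof -
  have eq: "f = (\<lambda>x. \<Sum>a\<in>UNIV. axis a (f x $ a))"
    by (auto simp: vec_eq_iff axis_def if_distrib cong: if_cong)
  have ax: "(axis a :: 'b \<Rightarrow> 'b^'i) \<in> borel_measurable borel" for a
    unfolding axis_def
    apply (intro borel_measurable_continuous_onI continuous_on_vec_lambda)
    subgoal for i by (cases "i = a") (auto intro: continuous_on_id continuous_on_const)
    done
  show ?thesis
    apply (subst eq)
    apply (rule borel_measurable_sum)
    apply (rule measurable_compose[OF assms ax])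
    done
qed

lemma inv0_meas[measurable]:
  "(\<lambda>p::(real^'n^'n) \<times> (real^'n). inv0 (fst p) *v snd p) \<in> borel_measurable borel"
  unfolding inv0_cramer
proof (intro meas_vec)
  fix a
  have c: "(\<lambda>p::(real^'n^'n) \<times> (real^'n). cramer_col (fst p) (snd p) a) \<in> borel_measurable borel"
    by (intro borel_measurable_continuous_onI continuous_at_imp_continuous_on ballI)
      (auto simp: isCont_def intro!: tendsto_intros tendsto_ident_at)
  show "(\<lambda>x. (\<chi> k. det (cramer_col (fst x) (snd x) k) / det (fst x)) $ a) \<in> borel_measurable borel"
  proof -
    have f: "(\<lambda>p::(real^'n^'n) \<times> (real^'n). fst p) \<in> borel_measurable borel"
      by (intro borel_measurable_continuous_onI continuous_intros)
    show ?thesis using measurable_compose[OF c det_meas] measurable_compose[OF f det_meas] by simp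
  qed
qed

lemma inv0_scale:
  fixes A :: "real^'n^'n"
  assumes "r \<noteq> 0"
  shows "inv0 (r *\<^sub>R A) *v (r *\<^sub>R b) = inv0 A *v b"
proof -
  have d: "det (r *\<^sub>R B) = r ^ CARD('n) * det B" for B :: "real^'n^'n"
  proof -
    have "r *\<^sub>R B = (\<chi> i. (\<lambda>_. r) i *s B $ i)" by (simp add: vec_eq_iff)
    then show ?thesis by (simp add: det_rows_mul)
  qed
  have c: "cramer_col (r *\<^sub>R A) (r *\<^sub>R b) k = r *\<^sub>R cramer_col A b k" for k
    by (simp add: cramer_col_def vec_eq_iff)
  show ?thesis unfolding inv0_cramer vec_eq_iff
  proof
    fix k
    have "det (cramer_col (r *\<^sub>R A) (r *\<^sub>R b) k) = r ^ CARD('n) * det (cramer_col A b k)"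
      by (simp only: c d)
    then show "(\<chi> k. det (cramer_col (r *\<^sub>R A) (r *\<^sub>R b) k) / det (r *\<^sub>R A)) $ k =
        (\<chi> k. det (cramer_col A b k) / det A) $ k" using assms by (simp add: d)
  qed
qed


lemma (in prob_space) orth_avg:
  fixes U :: "nat \<Rightarrow> nat \<Rightarrow> 'a \<Rightarrow> real"
  assumes Um[measurable]: "\<And>n i. U n i \<in> borel_measurable M"
    and Ub: "\<And>n i \<omega>. \<omega> \<in> space M \<Longrightarrow> \<bar>U n i \<omega>\<bar> \<le> B"
    and Uo: "\<And>n i j. i < n \<Longrightarrow> j < n \<Longrightarrow> i \<noteq> j \<Longrightarrow> expectation (\<lambda>\<omega>. U n i \<omega> * U n j \<omega>) = 0"
  shows "conv_in_prob M (\<lambda>n \<omega>. (1 / real n) * (\<Sum>i<n. U n i \<omega>)) 0"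
  unfolding conv_in_prob_def
proof (intro conjI allI impI)
  show "\<And>n. (\<lambda>\<omega>. (1 / real n) * (\<Sum>i<n. U n i \<omega>)) \<in> borel_measurable M" by measurable
  fix e :: real assume "e > 0"
  have B0: "0 \<le> B" using Ub[of _ 0 0] by (meson abs_ge_zero order_trans some_in_eq subprob_not_empty)
  have int: "\<And>n i. integrable M (U n i)"
    using Ub by (intro integrable_const_bound[where B=B]) auto
  have int2: "\<And>n i j. integrable M (\<lambda>\<omega>. U n i \<omega> * U n j \<omega>)"
  proof -
    fix n i j
    show "integrable M (\<lambda>\<omega>. U n i \<omega> * U n j \<omega>)"
    proof (rule integrable_const_bound[where B="B*B"])
      show "AE x in M. norm (U n i x * U n j x) \<le> B * B"
        using Ub by (auto simp: abs_mult intro!: mult_mono B0)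
    qed measurable
  qed
  define S where "S n \<omega> = (1 / real n) * (\<Sum>i<n. U n i \<omega>)" for n \<omega>
  have Sm[measurable]: "S n \<in> borel_measurable M" for n unfolding S_def by measurable
  have ES: "expectation (\<lambda>\<omega>. (S n \<omega>)\<^sup>2) \<le> B\<^sup>2 / real n" for n
  proof (cases "n = 0")
    case True then show ?thesis by (simp add: S_def)
  next
    case False
    have "(\<lambda>\<omega>. (S n \<omega>)\<^sup>2) = (\<lambda>\<omega>. (1 / real n)\<^sup>2 * (\<Sum>i<n. \<Sum>j<n. U n i \<omega> * U n j \<omega>))"
      by (auto simp: S_def power2_eq_square sum_product)
    then have "expectation (\<lambda>\<omega>. (S n \<omega>)\<^sup>2) = (1 / real n)\<^sup>2 * (\<Sum>i<n. \<Sum>j<n. expectation (\<lambda>\<omega>. U n i \<omega> * U n j \<omega>))"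
      using int2 by (simp add: integral_sum integrable_sum)
    also have "(\<Sum>i<n. \<Sum>j<n. expectation (\<lambda>\<omega>. U n i \<omega> * U n j \<omega>)) = (\<Sum>i<n. expectation (\<lambda>\<omega>. U n i \<omega> * U n i \<omega>))"
    proof (rule sum.cong[OF refl])
      fix i assume "i \<in> {..<n}"
      then show "(\<Sum>j<n. expectation (\<lambda>\<omega>. U n i \<omega> * U n j \<omega>)) = expectation (\<lambda>\<omega>. U n i \<omega> * U n i \<omega>)"
        using Uo by (subst sum.remove[of _ i]) (auto intro!: sum.neutral)
    qed
    also have "\<dots> \<le> (\<Sum>i<n. B\<^sup>2)"
    proof (rule sum_mono)
      fix i
      have "expectation (\<lambda>\<omega>. U n i \<omega> * U n i \<omega>) \<le> expectation (\<lambda>\<omega>. B\<^sup>2)"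
      proof (rule integral_mono[OF int2])
        fix \<omega> assume "\<omega> \<in> space M"
        then have "\<bar>U n i \<omega>\<bar> * \<bar>U n i \<omega>\<bar> \<le> B * B" using Ub B0 by (intro mult_mono) auto
        then show "U n i \<omega> * U n i \<omega> \<le> B\<^sup>2" by (simp add: power2_eq_square abs_mult[symmetric])
      qed simp
      then show "expectation (\<lambda>\<omega>. U n i \<omega> * U n i \<omega>) \<le> B\<^sup>2" by (simp add: prob_space)
    qed
    finally show ?thesis using False by (simp add: power2_eq_square field_simps)
  qed
  have intS: "integrable M (\<lambda>\<omega>. (S n \<omega>)\<^sup>2)" for n
  proof -
    have "(\<lambda>\<omega>. (S n \<omega>)\<^sup>2) = (\<lambda>\<omega>. (1 / real n)\<^sup>2 * (\<Sum>i<n. \<Sum>j<n. U n i \<omega> * U n j \<omega>))"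
      by (auto simp: S_def power2_eq_square sum_product)
    then show ?thesis using int2 by (simp add: integrable_sum)
  qed
  have bound: "measure M {\<omega> \<in> space M. dist (S n \<omega>) 0 > e} \<le> (B\<^sup>2 / e\<^sup>2) / real n" for n
  proof -
    have "measure M {\<omega> \<in> space M. dist (S n \<omega>) 0 > e} \<le> measure M {\<omega> \<in> space M. (S n \<omega>)\<^sup>2 \<ge> e\<^sup>2}"
    proof (rule finite_measure_mono)
      show "{\<omega> \<in> space M. dist (S n \<omega>) 0 > e} \<subseteq> {\<omega> \<in> space M. (S n \<omega>)\<^sup>2 \<ge> e\<^sup>2}"
        using \<open>e>0\<close> by (auto simp: abs_le_square_iff[symmetric])
    qed measurable
    also have "\<dots> \<le> expectation (\<lambda>\<omega>. (S n \<omega>)\<^sup>2) / e\<^sup>2"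
      by (rule integral_Markov_inequality_measure[OF intS]) (use \<open>e>0\<close> in auto)
    also have "\<dots> \<le> (B\<^sup>2 / real n) / e\<^sup>2" by (rule divide_right_mono[OF ES]) simp
    also have "\<dots> = (B\<^sup>2 / e\<^sup>2) / real n" by simp
    finally show ?thesis .
  qed
  have lim: "(\<lambda>n. (B\<^sup>2 / e\<^sup>2) / real n) \<longlonglongrightarrow> 0"
    by (rule lim_const_over_n)
  show "(\<lambda>n. measure M {\<omega> \<in> space M. dist ((1 / real n) * (\<Sum>i<n. U n i \<omega>)) 0 > e}) \<longlonglongrightarrow> 0"
    unfolding S_def[symmetric]
  proof (rule tendsto_sandwich[OF _ _ tendsto_const lim])
    show "\<forall>\<^sub>F n in sequentially. 0 \<le> prob {\<omega> \<in> space M. e < dist (S n \<omega>) 0}" by simp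
    show "\<forall>\<^sub>F n in sequentially. prob {\<omega> \<in> space M. e < dist (S n \<omega>) 0} \<le> (B\<^sup>2 / e\<^sup>2) / real n"
      by (intro always_eventually allI bound)
  qed
qed


locale setting = prob_space M
  for M :: "'a measure" +
  fixes MW :: "'w measure"
    and Y :: "nat \<Rightarrow> 'a \<Rightarrow> real^'k"
    and W :: "nat \<Rightarrow> 'a \<Rightarrow> 'w"
    and fZ :: "'w \<Rightarrow> 'z"
    and fX :: "'w \<Rightarrow> real^'p"
    and Zs :: "'z set"
    and I :: "nat \<Rightarrow> nat \<Rightarrow> 'a \<Rightarrow> 'k"
    and \<pi> :: "'k \<Rightarrow> real"
  assumes pi_pos: "\<And>t. 0 < \<pi> t \<and> \<pi> t < 1"
    and pi_sum: "(\<Sum>t\<in>UNIV. \<pi> t) = 1"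
    and fX_meas: "fX \<in> borel_measurable MW"
    and fZ_meas: "fZ \<in> measurable MW (count_space UNIV)"
    and Zs_fin: "finite Zs"
    and fZ_Zs: "\<And>w. w \<in> space MW \<Longrightarrow> fZ w \<in> Zs"
    and I_meas: "\<And>n i. i < n \<Longrightarrow> I n i \<in> measurable M (count_space UNIV)"
    and C1_indep: "indep_vars (\<lambda>_. borel \<Otimes>\<^sub>M MW) (\<lambda>i \<omega>. (Y i \<omega>, W i \<omega>)) UNIV"
    and C1_ident: "\<And>i. distr M (borel \<Otimes>\<^sub>M MW) (\<lambda>\<omega>. (Y i \<omega>, W i \<omega>))
                       = distr M (borel \<Otimes>\<^sub>M MW) (\<lambda>\<omega>. (Y 0 \<omega>, W 0 \<omega>))"
    and C1_mom: "\<And>t. integrable M (\<lambda>\<omega>. (Y 0 \<omega> $ t)\<^sup>2)"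
    and C2: "\<And>n. cond_indep_disc M
               (\<lambda>\<omega>. restrict (\<lambda>i. I n i \<omega>) {..<n}) (PiM {..<n} (\<lambda>_. count_space UNIV))
               (\<lambda>\<omega>. restrict (\<lambda>i. (Y i \<omega>, W i \<omega>)) {..<n}) (PiM {..<n} (\<lambda>_. borel \<Otimes>\<^sub>M MW))
               (\<lambda>\<omega>. restrict (\<lambda>i. fZ (W i \<omega>)) {..<n})"
    and C3_D: "\<And>z t. z \<in> Zs \<Longrightarrow> conv_in_prob M
               (\<lambda>n \<omega>. (real (card (samp (\<lambda>i. I n i \<omega>) (\<lambda>i. fZ (W i \<omega>)) n t z)) - \<pi> t * real (card {i. i < n \<and> fZ (W i \<omega>) = z}))
                       / real (card {i. i < n \<and> fZ (W i \<omega>) = z}))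
               0"
    and X_mom: "integrable M (\<lambda>\<omega>. (norm (fX (W 0 \<omega>)))\<^sup>2)"
    and XY_mom: "\<And>l. integrable M (\<lambda>\<omega>. (norm ((Y 0 \<omega> $ l) *\<^sub>R fX (W 0 \<omega>)))\<^sup>2)"
    and var_pd: "\<And>z. z \<in> Zs \<Longrightarrow> posdef (cond_var M (\<lambda>\<omega>. fX (W 0 \<omega>)) (\<lambda>\<omega>. fZ (W 0 \<omega>)) z)"
begin

definition V :: "nat \<Rightarrow> 'a \<Rightarrow> (real^'k) \<times> 'w" where "V i \<omega> = (Y i \<omega>, W i \<omega>)"

lemma V_meas[measurable]: "V i \<in> measurable M (borel \<Otimes>\<^sub>M MW)"
  using C1_indep unfolding indep_vars_def V_def by auto

lemma W_meas[measurable]: "W i \<in> measurable M MW"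
proof -
  have "(\<lambda>\<omega>. snd (V i \<omega>)) \<in> measurable M MW" by measurable
  then show ?thesis by (simp add: V_def)
qed

lemma Y_meas[measurable]: "Y i \<in> borel_measurable M"
proof -
  have "(\<lambda>\<omega>. fst (V i \<omega>)) \<in> borel_measurable M" by measurable
  then show ?thesis by (simp add: V_def)
qed

lemma fZ_meas'[measurable]: "fZ \<in> measurable MW (count_space UNIV)" by (rule fZ_meas)
lemma fX_meas'[measurable]: "fX \<in> borel_measurable MW" by (rule fX_meas)

lemma W_space: "\<omega> \<in> space M \<Longrightarrow> W i \<omega> \<in> space MW"
  using W_meas unfolding measurable_def by auto

lemma Z_Zs: "\<omega> \<in> space M \<Longrightarrow> fZ (W i \<omega>) \<in> Zs"
  using W_space fZ_Zs by auto

lemma distV: "distr M (borel \<Otimes>\<^sub>M MW) (V i) = distr M (borel \<Otimes>\<^sub>M MW) (V 0)"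
  using C1_ident[of i] by (simp add: V_def[abs_def])

lemma integral_V:
  fixes g :: "(real^'k) \<times> 'w \<Rightarrow> 'b::{banach, second_countable_topology}"
  assumes [measurable]: "g \<in> borel_measurable (borel \<Otimes>\<^sub>M MW)"
  shows "(\<integral>\<omega>. g (V i \<omega>) \<partial>M) = (\<integral>\<omega>. g (V 0 \<omega>) \<partial>M)"
proof -
  have "(\<integral>\<omega>. g (V i \<omega>) \<partial>M) = integral\<^sup>L (distr M (borel \<Otimes>\<^sub>M MW) (V i)) g"
    by (rule integral_distr[symmetric]) measurable
  also have "\<dots> = integral\<^sup>L (distr M (borel \<Otimes>\<^sub>M MW) (V 0)) g" by (simp add: distV[of i])
  also have "\<dots> = (\<integral>\<omega>. g (V 0 \<omega>) \<partial>M)"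
    by (rule integral_distr) measurable
  finally show ?thesis .
qed

lemma integrable_V:
  fixes g :: "(real^'k) \<times> 'w \<Rightarrow> 'b::{banach, second_countable_topology}"
  assumes [measurable]: "g \<in> borel_measurable (borel \<Otimes>\<^sub>M MW)"
  shows "integrable M (\<lambda>\<omega>. g (V i \<omega>)) \<longleftrightarrow> integrable M (\<lambda>\<omega>. g (V 0 \<omega>))"
proof -
  have "integrable M (\<lambda>\<omega>. g (V i \<omega>)) \<longleftrightarrow> integrable (distr M (borel \<Otimes>\<^sub>M MW) (V i)) g"
    by (rule integrable_distr_eq[symmetric]) measurable
  also have "\<dots> \<longleftrightarrow> integrable (distr M (borel \<Otimes>\<^sub>M MW) (V 0)) g" by (simp add: distV[of i])
  also have "\<dots> \<longleftrightarrow> integrable M (\<lambda>\<omega>. g (V 0 \<omega>))"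
    by (rule integrable_distr_eq) measurable
  finally show ?thesis .
qed

lemma indprod:
  fixes \<phi> :: "nat \<Rightarrow> (real^'k) \<times> 'w \<Rightarrow> real"
  assumes J: "finite J"
    and m[measurable]: "\<And>l. \<phi> l \<in> borel_measurable (borel \<Otimes>\<^sub>M MW)"
    and b: "\<And>l v. v \<in> space (borel \<Otimes>\<^sub>M MW) \<Longrightarrow> \<bar>\<phi> l v\<bar> \<le> B"
  shows "(\<integral>\<omega>. (\<Prod>l\<in>J. \<phi> l (V l \<omega>)) \<partial>M) = (\<Prod>l\<in>J. \<integral>\<omega>. \<phi> l (V l \<omega>) \<partial>M)"
proof (rule indep_vars_lebesgue_integral[OF J])
  have "indep_vars (\<lambda>_. borel) (\<lambda>l \<omega>. \<phi> l (V l \<omega>)) UNIV"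
    using indep_vars_compose2[OF C1_indep, of \<phi> "\<lambda>_. borel"] by (simp add: V_def[abs_def])
  then show "indep_vars (\<lambda>_. borel) (\<lambda>l \<omega>. \<phi> l (V l \<omega>)) J"
    by (rule indep_vars_subset) auto
  fix l
  show "integrable M (\<lambda>\<omega>. \<phi> l (V l \<omega>))"
  proof (rule integrable_const_bound[where B=B])
    show "AE x in M. norm (\<phi> l (V l x)) \<le> B"
      by (intro AE_I2) (simp add: b measurable_space[OF V_meas])
  qed measurable
qed

end

lemma (in prob_space) cond_indep_integral:
  fixes F :: "'c \<Rightarrow> real"
  assumes ci: "cond_indep_disc M X MX Y MY Z"
    and Xm[measurable]: "X \<in> measurable M MX" and Ym[measurable]: "Y \<in> measurable M MY"
    and Ez[measurable]: "{\<omega>\<in>space M. Z \<omega> = z} \<in> sets M"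
    and A[measurable]: "A \<in> sets MX"
    and F[measurable]: "F \<in> borel_measurable MY" and Fb: "\<And>v. v \<in> space MY \<Longrightarrow> \<bar>F v\<bar> \<le> B"
  shows "(\<integral>\<omega>. indicator {\<omega>\<in>space M. X \<omega> \<in> A \<and> Z \<omega> = z} \<omega> * F (Y \<omega>) \<partial>M) * prob {\<omega>\<in>space M. Z \<omega> = z}
       = prob {\<omega>\<in>space M. X \<omega> \<in> A \<and> Z \<omega> = z} * (\<integral>\<omega>. indicator {\<omega>\<in>space M. Z \<omega> = z} \<omega> * F (Y \<omega>) \<partial>M)"
proof -
  define E1 where "E1 = {\<omega>\<in>space M. X \<omega> \<in> A \<and> Z \<omega> = z}"
  define E2 where "E2 = {\<omega>\<in>space M. Z \<omega> = z}"
  have E1m[measurable]: "E1 \<in> sets M"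
  proof -
    have "E1 = (X -` A \<inter> space M) \<inter> E2" by (auto simp: E1_def E2_def)
    then show ?thesis using Ez by (simp add: E2_def sets.Int measurable_sets[OF Xm A])
  qed
  have E2m[measurable]: "E2 \<in> sets M" using Ez by (simp add: E2_def)
  define c1 where "c1 = prob E1"
  define c2 where "c2 = prob E2"
  have c1: "c1 \<ge> 0" "c2 \<ge> 0" by (auto simp: c1_def c2_def)
  define g1 where "g1 \<omega> = c2 * indicator E1 \<omega>" for \<omega>
  define g2 where "g2 \<omega> = c1 * indicator E2 \<omega>" for \<omega>
  have g1m[measurable]: "g1 \<in> borel_measurable M" unfolding g1_def by measurable
  have g2m[measurable]: "g2 \<in> borel_measurable M" unfolding g2_def by measurable
  have g1p: "\<And>\<omega>. 0 \<le> g1 \<omega>" and g2p: "\<And>\<omega>. 0 \<le> g2 \<omega>" using c1 by (auto simp: g1_def g2_def)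
  have em: "emeasure (density M (\<lambda>x. ennreal (g x))) S = ennreal c * emeasure M (E \<inter> S)"
    if "g = (\<lambda>\<omega>. c * indicator E \<omega>)" "c \<ge> 0" "E \<in> sets M" "S \<in> sets M" for g :: "'a \<Rightarrow> real" and c E S
  proof -
    have "emeasure (density M (\<lambda>x. ennreal (g x))) S = (\<integral>\<^sup>+ x. ennreal (g x) * indicator S x \<partial>M)"
      using that by (subst emeasure_density) auto
    also have "\<dots> = (\<integral>\<^sup>+ x. ennreal c * indicator (E \<inter> S) x \<partial>M)"
      using that by (intro nn_integral_cong) (auto simp: indicator_def)
    also have "\<dots> = ennreal c * emeasure M (E \<inter> S)"
      using that by (intro nn_integral_cmult_indicator) auto
    finally show ?thesis .
  qed
  define N1 where "N1 = distr (density M (\<lambda>x. ennreal (g1 x))) MY Y"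
  define N2 where "N2 = distr (density M (\<lambda>x. ennreal (g2 x))) MY Y"
  have "N1 = N2"
  proof (rule measure_eqI)
    show "sets N1 = sets N2" by (simp add: N1_def N2_def)
    fix S assume "S \<in> sets N1"
    then have S[measurable]: "S \<in> sets MY" by (simp add: N1_def)
    have YS: "Y -` S \<inter> space M \<in> sets M" by measurable
    have "emeasure N1 S = emeasure (density M (\<lambda>x. ennreal (g1 x))) (Y -` S \<inter> space M)"
      unfolding N1_def by (subst emeasure_distr) auto
    also have "\<dots> = ennreal c2 * emeasure M (E1 \<inter> (Y -` S \<inter> space M))"
      by (rule em) (auto simp: g1_def[abs_def] c1 YS)
    also have "E1 \<inter> (Y -` S \<inter> space M) = {\<omega>\<in>space M. X \<omega> \<in> A \<and> Y \<omega> \<in> S \<and> Z \<omega> = z}"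
      by (auto simp: E1_def)
    finally have e1: "emeasure N1 S = ennreal c2 * emeasure M {\<omega>\<in>space M. X \<omega> \<in> A \<and> Y \<omega> \<in> S \<and> Z \<omega> = z}" .
    have "emeasure N2 S = emeasure (density M (\<lambda>x. ennreal (g2 x))) (Y -` S \<inter> space M)"
      unfolding N2_def by (subst emeasure_distr) auto
    also have "\<dots> = ennreal c1 * emeasure M (E2 \<inter> (Y -` S \<inter> space M))"
      by (rule em) (auto simp: g2_def[abs_def] c1 YS)
    also have "E2 \<inter> (Y -` S \<inter> space M) = {\<omega>\<in>space M. Y \<omega> \<in> S \<and> Z \<omega> = z}"
      by (auto simp: E2_def)
    finally have e2: "emeasure N2 S = ennreal c1 * emeasure M {\<omega>\<in>space M. Y \<omega> \<in> S \<and> Z \<omega> = z}" .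
    have key: "measure M {\<omega>\<in>space M. X \<omega> \<in> A \<and> Y \<omega> \<in> S \<and> Z \<omega> = z} * c2
        = c1 * measure M {\<omega>\<in>space M. Y \<omega> \<in> S \<and> Z \<omega> = z}"
      using ci A S unfolding cond_indep_disc_def c1_def c2_def E1_def E2_def by blast
    show "emeasure N1 S = emeasure N2 S"
      unfolding e1 e2 using key c1
      by (simp add: emeasure_eq_measure ennreal_mult'[symmetric] mult.commute)
  qed
  have i1: "integral\<^sup>L N1 F = (\<integral>\<omega>. g1 \<omega> * F (Y \<omega>) \<partial>M)"
    unfolding N1_def
    by (subst integral_distr) (auto simp: integral_density g1p)
  have i2: "integral\<^sup>L N2 F = (\<integral>\<omega>. g2 \<omega> * F (Y \<omega>) \<partial>M)"
    unfolding N2_def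
    by (subst integral_distr) (auto simp: integral_density g2p)
  have "(\<integral>\<omega>. g1 \<omega> * F (Y \<omega>) \<partial>M) = (\<integral>\<omega>. g2 \<omega> * F (Y \<omega>) \<partial>M)"
    using i1 i2 \<open>N1 = N2\<close> by simp
  then have "c2 * (\<integral>\<omega>. indicator E1 \<omega> * F (Y \<omega>) \<partial>M) = c1 * (\<integral>\<omega>. indicator E2 \<omega> * F (Y \<omega>) \<partial>M)"
    by (simp add: g1_def g2_def mult.assoc)
  then show ?thesis by (simp add: E1_def E2_def c1_def c2_def mult.commute)
qed


context setting begin

lemma Iv_meas[measurable]: "(\<lambda>\<omega>. restrict (\<lambda>i. I n i \<omega>) {..<n}) \<in> measurable M (PiM {..<n} (\<lambda>_. count_space UNIV))"
  by (rule measurable_restrict) (auto intro: I_meas)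

lemma Vv_meas[measurable]: "(\<lambda>\<omega>. restrict (\<lambda>i. (Y i \<omega>, W i \<omega>)) {..<n}) \<in> measurable M (PiM {..<n} (\<lambda>_. borel \<Otimes>\<^sub>M MW))"
proof (rule measurable_restrict)
  fix i show "(\<lambda>\<omega>. (Y i \<omega>, W i \<omega>)) \<in> measurable M (borel \<Otimes>\<^sub>M MW)"
    using V_meas[of i] by (simp add: V_def[abs_def])
qed

lemma Zv_eq:
  assumes "zz \<in> extensional {..<n}"
  shows "restrict (\<lambda>i. fZ (W i \<omega>)) {..<n} = zz \<longleftrightarrow> (\<forall>l\<in>{..<n}. fZ (W l \<omega>) = zz l)"
  using assms by (auto simp: restrict_def extensional_def fun_eq_iff)

lemma Zv_sets[measurable]:
  assumes "zz \<in> extensional {..<n}"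
  shows "{\<omega>\<in>space M. restrict (\<lambda>i. fZ (W i \<omega>)) {..<n} = zz} \<in> sets M"
proof -
  have "{\<omega>\<in>space M. restrict (\<lambda>i. fZ (W i \<omega>)) {..<n} = zz} = {\<omega>\<in>space M. \<forall>l\<in>{..<n}. fZ (W l \<omega>) = zz l}"
    using Zv_eq[OF assms] by auto
  also have "\<dots> \<in> sets M" by measurable
  finally show ?thesis .
qed

lemma indz:
  fixes k :: "(real^'k) \<times> 'w \<Rightarrow> real"
  assumes km[measurable]: "k \<in> borel_measurable (borel \<Otimes>\<^sub>M MW)"
    and kb: "\<And>v. v \<in> space (borel \<Otimes>\<^sub>M MW) \<Longrightarrow> \<bar>k v\<bar> \<le> B"
    and kz: "\<And>v. fZ (snd v) \<noteq> z \<Longrightarrow> k v = 0"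
    and k0: "expectation (\<lambda>\<omega>. k (V 0 \<omega>)) = 0"
    and ij: "i < n" "j < n" "i \<noteq> j"
    and zz: "zz \<in> extensional {..<n}"
  shows "expectation (\<lambda>\<omega>. indicator {\<omega>\<in>space M. restrict (\<lambda>i. fZ (W i \<omega>)) {..<n} = zz} \<omega> * (k (V i \<omega>) * k (V j \<omega>))) = 0"
proof -
  define B' where "B' = max B 1"
  define \<phi> where "\<phi> l v = (if fZ (snd v) = zz l then (if l = i \<or> l = j then k v else 1) else 0)" for l v
  have \<phi>m[measurable]: "\<phi> l \<in> borel_measurable (borel \<Otimes>\<^sub>M MW)" for l
    unfolding \<phi>_def by measurable
  have \<phi>b: "\<bar>\<phi> l v\<bar> \<le> B'" if "v \<in> space (borel \<Otimes>\<^sub>M MW)" for l v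
    using kb[OF that] by (auto simp: \<phi>_def B'_def)
  have eq: "indicator {\<omega>\<in>space M. restrict (\<lambda>i. fZ (W i \<omega>)) {..<n} = zz} \<omega> * (k (V i \<omega>) * k (V j \<omega>))
      = (\<Prod>l\<in>{..<n}. \<phi> l (V l \<omega>))" if \<omega>: "\<omega> \<in> space M" for \<omega>
  proof -
    have split: "{..<n} = insert i (insert j ({..<n} - {i, j}))" using ij by auto
    have prodeq: "(\<Prod>l\<in>{..<n}. \<phi> l (V l \<omega>)) = \<phi> i (V i \<omega>) * \<phi> j (V j \<omega>) * (\<Prod>l\<in>{..<n} - {i,j}. \<phi> l (V l \<omega>))"
      using ij by (subst split) (simp add: mult.assoc)
    show ?thesis
    proof (cases "\<forall>l\<in>{..<n}. fZ (W l \<omega>) = zz l")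
      case True
      then have "(\<Prod>l\<in>{..<n} - {i,j}. \<phi> l (V l \<omega>)) = 1"
        by (intro prod.neutral) (auto simp: \<phi>_def V_def)
      then show ?thesis using True \<omega> ij unfolding prodeq
        by (simp add: Zv_eq[OF zz] \<phi>_def V_def)
    next
      case False
      then obtain l where l: "l < n" "fZ (W l \<omega>) \<noteq> zz l" by auto
      then have "(\<Prod>l\<in>{..<n}. \<phi> l (V l \<omega>)) = 0"
        by (intro prod_zero) (auto simp: \<phi>_def V_def intro!: bexI[of _ l])
      then show ?thesis using False \<omega> by (simp add: Zv_eq[OF zz])
    qed
  qed
  have "expectation (\<lambda>\<omega>. indicator {\<omega>\<in>space M. restrict (\<lambda>i. fZ (W i \<omega>)) {..<n} = zz} \<omega> * (k (V i \<omega>) * k (V j \<omega>)))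
      = expectation (\<lambda>\<omega>. \<Prod>l\<in>{..<n}. \<phi> l (V l \<omega>))"
    by (rule Bochner_Integration.integral_cong[OF refl eq])
  also have "\<dots> = (\<Prod>l\<in>{..<n}. expectation (\<lambda>\<omega>. \<phi> l (V l \<omega>)))"
    by (rule indprod[OF _ \<phi>m \<phi>b]) auto
  also have "\<dots> = 0"
  proof (rule prod_zero)
    show "\<exists>l\<in>{..<n}. expectation (\<lambda>\<omega>. \<phi> l (V l \<omega>)) = 0"
    proof (intro bexI)
      have e: "\<phi> i v = (if zz i = z then k v else 0)" for v
        using kz[of v] by (auto simp: \<phi>_def)
      show "expectation (\<lambda>\<omega>. \<phi> i (V i \<omega>)) = 0"
      proof (cases "zz i = z")
        case True
        then have "expectation (\<lambda>\<omega>. \<phi> i (V i \<omega>)) = expectation (\<lambda>\<omega>. k (V i \<omega>))" by (simp add: e)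
        also have "\<dots> = expectation (\<lambda>\<omega>. k (V 0 \<omega>))" by (rule integral_V) measurable
        finally show ?thesis using k0 by simp
      next
        case False then show ?thesis by (simp add: e)
      qed
    qed (use ij in auto)
  qed simp
  finally show ?thesis .
qed

lemma orth:
  fixes k :: "(real^'k) \<times> 'w \<Rightarrow> real"
  assumes km[measurable]: "k \<in> borel_measurable (borel \<Otimes>\<^sub>M MW)"
    and kb: "\<And>v. v \<in> space (borel \<Otimes>\<^sub>M MW) \<Longrightarrow> \<bar>k v\<bar> \<le> B"
    and kz: "\<And>v. fZ (snd v) \<noteq> z \<Longrightarrow> k v = 0"
    and k0: "expectation (\<lambda>\<omega>. k (V 0 \<omega>)) = 0"
    and ij: "i < n" "j < n" "i \<noteq> j"
  shows "expectation (\<lambda>\<omega>. ((if I n i \<omega> = t then 1 else 0) * k (V i \<omega>)) * ((if I n j \<omega> = t then 1 else 0) * k (V j \<omega>))) = 0"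
proof -
  define B' where "B' = max B 1"
  have kb': "\<bar>k v\<bar> \<le> B'" if "v \<in> space (borel \<Otimes>\<^sub>M MW)" for v using kb[OF that] by (auto simp: B'_def)
  have B'0: "0 \<le> B'" by (simp add: B'_def)
  define Q where "Q = PiE {..<n} (\<lambda>_. Zs)"
  have Qf: "finite Q" unfolding Q_def using Zs_fin by (intro finite_PiE) auto
  define Iv where "Iv \<omega> = restrict (\<lambda>i. I n i \<omega>) {..<n}" for \<omega>
  define Vv where "Vv \<omega> = restrict (\<lambda>i. (Y i \<omega>, W i \<omega>)) {..<n}" for \<omega>
  define Zv where "Zv \<omega> = restrict (\<lambda>i. fZ (W i \<omega>)) {..<n}" for \<omega>
  define MX where "MX = PiM {..<n} (\<lambda>_. count_space (UNIV :: 'k set))"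
  define MY where "MY = PiM {..<n} (\<lambda>_. (borel :: (real^'k) measure) \<Otimes>\<^sub>M MW)"
  define A where "A = {x \<in> space MX. x i = t \<and> x j = t}"
  define F where "F vv = k (vv i) * k (vv j)" for vv :: "nat \<Rightarrow> (real^'k) \<times> 'w"
  have Ivm[measurable]: "Iv \<in> measurable M MX" unfolding Iv_def[abs_def] MX_def by (rule Iv_meas)
  have Vvm[measurable]: "Vv \<in> measurable M MY" unfolding Vv_def[abs_def] MY_def by (rule Vv_meas)
  have Am[measurable]: "A \<in> sets MX"
  proof -
    have ci: "(\<lambda>x. x i) \<in> measurable MX (count_space UNIV)" "(\<lambda>x. x j) \<in> measurable MX (count_space UNIV)"
      unfolding MX_def using ij by (auto intro!: measurable_component_singleton)
    have "A = ((\<lambda>x. x i) -` {t} \<inter> space MX) \<inter> ((\<lambda>x. x j) -` {t} \<inter> space MX)"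
      by (auto simp: A_def)
    then show ?thesis using measurable_sets[OF ci(1), of "{t}"] measurable_sets[OF ci(2), of "{t}"] by auto
  qed
  have Fm[measurable]: "F \<in> borel_measurable MY"
  proof -
    have ci: "(\<lambda>x. x i) \<in> measurable MY (borel \<Otimes>\<^sub>M MW)" "(\<lambda>x. x j) \<in> measurable MY (borel \<Otimes>\<^sub>M MW)"
      unfolding MY_def using ij by (auto intro!: measurable_component_singleton)
    show ?thesis unfolding F_def[abs_def] by (intro borel_measurable_times measurable_compose[OF ci(1) km] measurable_compose[OF ci(2) km])
  qed
  have Fb: "\<bar>F v\<bar> \<le> B' * B'" if "v \<in> space MY" for v
  proof -
    have "v i \<in> space (borel \<Otimes>\<^sub>M MW)" "v j \<in> space (borel \<Otimes>\<^sub>M MW)" using that ij by (auto simp: MY_def space_PiM)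
    then show ?thesis unfolding F_def abs_mult by (intro mult_mono kb') (auto simp: B'0)
  qed
  have FV: "F (Vv \<omega>) = k (V i \<omega>) * k (V j \<omega>)" for \<omega> using ij by (simp add: F_def Vv_def V_def)
  have IvA: "Iv \<omega> \<in> A \<longleftrightarrow> I n i \<omega> = t \<and> I n j \<omega> = t" for \<omega>
    using ij by (auto simp: A_def MX_def space_PiM Iv_def)
  have ZvQ: "Zv \<omega> \<in> Q" if "\<omega> \<in> space M" for \<omega> using Z_Zs[OF that] by (auto simp: Zv_def Q_def)
  have Qe: "zz \<in> extensional {..<n}" if "zz \<in> Q" for zz using that by (auto simp: Q_def PiE_def)
  define E where "E zz = {\<omega>\<in>space M. Iv \<omega> \<in> A \<and> Zv \<omega> = zz}" for zz
  define E2 where "E2 zz = {\<omega>\<in>space M. Zv \<omega> = zz}" for zz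
  have E2m[measurable]: "E2 zz \<in> sets M" if "zz \<in> Q" for zz
    using Zv_sets[OF Qe[OF that]] by (simp add: E2_def Zv_def)
  have Em[measurable]: "E zz \<in> sets M" if "zz \<in> Q" for zz
  proof -
    have "E zz = (Iv -` A \<inter> space M) \<inter> E2 zz" by (auto simp: E_def E2_def)
    then show ?thesis using E2m[OF that] measurable_sets[OF Ivm Am] by auto
  qed
  have pw: "((if I n i \<omega> = t then 1 else 0) * k (V i \<omega>)) * ((if I n j \<omega> = t then 1 else 0) * k (V j \<omega>))
      = (\<Sum>zz\<in>Q. indicator (E zz) \<omega> * F (Vv \<omega>))" if \<omega>: "\<omega> \<in> space M" for \<omega>
  proof -
    have "(\<Sum>zz\<in>Q. indicator (E zz) \<omega> * F (Vv \<omega>)) = (\<Sum>zz\<in>Q. if zz = Zv \<omega> then (if Iv \<omega> \<in> A then F (Vv \<omega>) else 0) else 0)"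
      using \<omega> by (intro sum.cong) (auto simp: E_def)
    also have "\<dots> = (if Iv \<omega> \<in> A then F (Vv \<omega>) else 0)"
      using ZvQ[OF \<omega>] Qf by (simp add: sum.delta)
    finally show ?thesis by (simp add: IvA FV)
  qed
  have intE: "integrable M (\<lambda>\<omega>. indicator (E zz) \<omega> * F (Vv \<omega>))" if "zz \<in> Q" for zz
  proof (rule integrable_const_bound[where B="B' * B'"])
    show "AE x in M. norm (indicator (E zz) x * F (Vv x)) \<le> B' * B'"
    proof (intro AE_I2)
      fix x assume "x \<in> space M"
      then have "\<bar>F (Vv x)\<bar> \<le> B' * B'" using Fb measurable_space[OF Vvm] by blast
      then show "norm (indicator (E zz) x * F (Vv x)) \<le> B' * B'"
        using B'0 by (auto simp: indicator_def)
    qed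
  qed (use that in measurable)
  have term0: "expectation (\<lambda>\<omega>. indicator (E zz) \<omega> * F (Vv \<omega>)) = 0" if zzQ: "zz \<in> Q" for zz
  proof -
    have ez: "{\<omega>\<in>space M. Zv \<omega> = zz} \<in> sets M" using E2m[OF zzQ] by (simp add: E2_def)
    have ci: "expectation (\<lambda>\<omega>. indicator (E zz) \<omega> * F (Vv \<omega>)) * prob (E2 zz)
        = prob (E zz) * expectation (\<lambda>\<omega>. indicator (E2 zz) \<omega> * F (Vv \<omega>))"
      unfolding E_def E2_def
      by (rule cond_indep_integral[OF C2[of n, folded Iv_def Vv_def Zv_def MX_def MY_def] Ivm Vvm ez Am Fm Fb])
    have z2: "expectation (\<lambda>\<omega>. indicator (E2 zz) \<omega> * F (Vv \<omega>)) = 0"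
    proof -
      have "expectation (\<lambda>\<omega>. indicator (E2 zz) \<omega> * F (Vv \<omega>)) =
         expectation (\<lambda>\<omega>. indicator {\<omega>\<in>space M. restrict (\<lambda>i. fZ (W i \<omega>)) {..<n} = zz} \<omega> * (k (V i \<omega>) * k (V j \<omega>)))"
        by (simp add: E2_def Zv_def FV)
      also have "\<dots> = 0" by (rule indz[OF km kb kz k0 ij Qe[OF zzQ]])
      finally show ?thesis .
    qed
    show ?thesis
    proof (cases "prob (E2 zz) = 0")
      case False
      then show ?thesis using ci z2 by simp
    next
      case True
      have "E2 zz \<in> null_sets M" using True E2m[OF zzQ] by (simp add: emeasure_eq_measure null_sets_def)
      then have "AE \<omega> in M. \<omega> \<notin> E2 zz" using AE_not_in by blast
      then have "AE \<omega> in M. indicator (E zz) \<omega> * F (Vv \<omega>) = 0"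
        by eventually_elim (auto simp: E_def E2_def)
      then have "expectation (\<lambda>\<omega>. indicator (E zz) \<omega> * F (Vv \<omega>)) = expectation (\<lambda>\<omega>. 0)"
        by (intro integral_cong_AE) (use zzQ in measurable)
      then show ?thesis by simp
    qed
  qed
  have "expectation (\<lambda>\<omega>. ((if I n i \<omega> = t then 1 else 0) * k (V i \<omega>)) * ((if I n j \<omega> = t then 1 else 0) * k (V j \<omega>)))
      = expectation (\<lambda>\<omega>. \<Sum>zz\<in>Q. indicator (E zz) \<omega> * F (Vv \<omega>))"
    by (rule Bochner_Integration.integral_cong[OF refl pw])
  also have "\<dots> = (\<Sum>zz\<in>Q. expectation (\<lambda>\<omega>. indicator (E zz) \<omega> * F (Vv \<omega>)))"
    by (rule Bochner_Integration.integral_sum) (rule intE)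
  also have "\<dots> = 0" by (simp add: term0)
  finally show ?thesis .
qed

end

lemma (in prob_space) tail_small:
  fixes g :: "'a \<Rightarrow> real"
  assumes gi: "integrable M g" and d: "\<delta> > 0"
  shows "\<exists>c\<ge>0. expectation (\<lambda>\<omega>. max (\<bar>g \<omega>\<bar> - c) 0) \<le> \<delta>"
proof -
  have gm[measurable]: "g \<in> borel_measurable M" using gi by auto
  define s where "s m \<omega> = max (\<bar>g \<omega>\<bar> - real m) 0" for m \<omega>
  have "(\<lambda>m. integral\<^sup>L M (s m)) \<longlonglongrightarrow> integral\<^sup>L M (\<lambda>\<omega>. 0)"
  proof (rule integral_dominated_convergence[where w="\<lambda>\<omega>. \<bar>g \<omega>\<bar>"])
    show "(\<lambda>\<omega>. 0::real) \<in> borel_measurable M" by simp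
    show "\<And>i. s i \<in> borel_measurable M" unfolding s_def by measurable
    show "integrable M (\<lambda>\<omega>. \<bar>g \<omega>\<bar>)" using gi by auto
    show "AE x in M. (\<lambda>i. s i x) \<longlonglongrightarrow> 0"
    proof (intro AE_I2)
      fix x
      obtain N :: nat where "\<bar>g x\<bar> \<le> real N" using real_arch_simple by blast
      then have "eventually (\<lambda>i. s i x = 0) sequentially"
        unfolding eventually_sequentially s_def by (intro exI[of _ N]) auto
      then show "(\<lambda>i. s i x) \<longlonglongrightarrow> 0" by (rule tendsto_eventually)
    qed
    show "\<And>i. AE x in M. norm (s i x) \<le> \<bar>g x\<bar>" by (auto simp: s_def)
  qed
  then have "eventually (\<lambda>m. integral\<^sup>L M (s m) < \<delta>) sequentially"
    using d by (intro order_tendstoD(2)) auto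
  then obtain m where "integral\<^sup>L M (s m) < \<delta>" by (auto simp: eventually_sequentially)
  then show ?thesis unfolding s_def by (intro exI[of _ "real m"]) auto
qed

context setting begin

lemma orth_Z:
  fixes z :: 'z
  assumes ij: "i \<noteq> j"
  defines "p \<equiv> prob {\<omega>\<in>space M. fZ (W 0 \<omega>) = z}"
  shows "expectation (\<lambda>\<omega>. ((if fZ (W i \<omega>) = z then 1 else 0) - p) * ((if fZ (W j \<omega>) = z then 1 else 0) - p)) = 0"
proof -
  define \<phi> where "\<phi> l v = (if fZ (snd v) = z then 1 else 0) - p" for l :: nat and v :: "(real^'k) \<times> 'w"
  have \<phi>m[measurable]: "\<phi> l \<in> borel_measurable (borel \<Otimes>\<^sub>M MW)" for l unfolding \<phi>_def by measurable
  have p01: "0 \<le> p" "p \<le> 1" by (auto simp: p_def)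
  have \<phi>b: "\<bar>\<phi> l v\<bar> \<le> 1" for l v using p01 by (auto simp: \<phi>_def)
  have "expectation (\<lambda>\<omega>. ((if fZ (W i \<omega>) = z then 1 else 0) - p) * ((if fZ (W j \<omega>) = z then 1 else 0) - p))
      = expectation (\<lambda>\<omega>. \<Prod>l\<in>{i,j}. \<phi> l (V l \<omega>))"
    using ij by (simp add: \<phi>_def V_def)
  also have "\<dots> = (\<Prod>l\<in>{i,j}. expectation (\<lambda>\<omega>. \<phi> l (V l \<omega>)))"
    by (rule indprod[OF _ \<phi>m \<phi>b]) auto
  also have "\<dots> = 0"
  proof -
    have Em: "{\<omega>\<in>space M. fZ (W 0 \<omega>) = z} \<in> sets M" by measurable
    have "expectation (\<lambda>\<omega>. \<phi> i (V i \<omega>)) = expectation (\<lambda>\<omega>. \<phi> i (V 0 \<omega>))"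
      by (rule integral_V) measurable
    also have "\<dots> = expectation (\<lambda>\<omega>. indicator {\<omega>\<in>space M. fZ (W 0 \<omega>) = z} \<omega> - p)"
      by (rule Bochner_Integration.integral_cong) (auto simp: \<phi>_def V_def indicator_def)
    also have "\<dots> = 0" using Em by (subst Bochner_Integration.integral_diff) (auto simp: p_def prob_space emeasure_eq_measure intro!: integrable_real_indicator)
    finally show ?thesis using ij by simp
  qed
  finally show ?thesis .
qed

end

lemma abs3: "\<bar>(a::real) + b + m * c\<bar> \<le> \<bar>a\<bar> + \<bar>b\<bar> + \<bar>m\<bar> * \<bar>c\<bar>"
  using abs_triangle_ineq[of "a+b" "m*c"] abs_triangle_ineq[of a b] by (simp add: abs_mult)

context setting begin

lemma T_meas: "i < n \<Longrightarrow> (\<lambda>\<omega>. if I n i \<omega> = t then 1 else 0 :: real) \<in> borel_measurable M"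
proof -
  assume "i < n"
  note [measurable] = I_meas[OF this]
  show ?thesis by measurable
qed

lemma sumT_meas:
  fixes g :: "nat \<Rightarrow> 'a \<Rightarrow> real"
  assumes "\<And>i. g i \<in> borel_measurable M"
  shows "(\<lambda>\<omega>. (1 / real n) * (\<Sum>i<n. (if I n i \<omega> = t then 1 else 0) * g i \<omega>)) \<in> borel_measurable M"
  by (intro borel_measurable_times borel_measurable_const borel_measurable_sum T_meas assms) auto

lemma TH:
  fixes f :: "(real^'k) \<times> 'w \<Rightarrow> real"
  assumes fm[measurable]: "f \<in> borel_measurable (borel \<Otimes>\<^sub>M MW)"
    and fi: "integrable M (\<lambda>\<omega>. f (V 0 \<omega>))"
    and fz: "\<And>v. fZ (snd v) \<noteq> z \<Longrightarrow> f v = 0"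
    and f0: "expectation (\<lambda>\<omega>. f (V 0 \<omega>)) = 0"
    and p: "prob {\<omega>\<in>space M. fZ (W 0 \<omega>) = z} > 0"
  shows "conv_in_prob M (\<lambda>n \<omega>. (1 / real n) * (\<Sum>i<n. (if I n i \<omega> = t then 1 else 0) * f (V i \<omega>))) 0"
  unfolding conv_in_prob_def
proof (intro conjI allI impI)
  show "\<And>n. (\<lambda>\<omega>. (1 / real n) * (\<Sum>i<n. (if I n i \<omega> = t then 1 else 0) * f (V i \<omega>))) \<in> borel_measurable M"
    by (rule sumT_meas) measurable
  define pz where "pz = prob {\<omega>\<in>space M. fZ (W 0 \<omega>) = z}"
  have pz: "pz > 0" using p by (simp add: pz_def)
  define S where "S n \<omega> = (1 / real n) * (\<Sum>i<n. (if I n i \<omega> = t then 1 else 0) * f (V i \<omega>))" for n \<omega>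
  have Sm[measurable]: "S n \<in> borel_measurable M" for n unfolding S_def by (rule sumT_meas) measurable
  fix e :: real assume e: "e > 0"
  show "(\<lambda>n. measure M {\<omega> \<in> space M. dist ((1 / real n) * (\<Sum>i<n. (if I n i \<omega> = t then 1 else 0) * f (V i \<omega>))) 0 > e}) \<longlonglongrightarrow> 0"
    unfolding S_def[symmetric]
  proof (rule tendsto_zero_by_eps)
    fix \<eta> :: real assume \<eta>: "\<eta> > 0"
    define \<delta> where "\<delta> = min (pz * e / 6) (\<eta> * e / 12)"
    have \<delta>: "\<delta> > 0" using pz e \<eta> by (simp add: \<delta>_def)
    obtain c where c: "c \<ge> 0" "expectation (\<lambda>\<omega>. max (\<bar>f (V 0 \<omega>)\<bar> - c) 0) \<le> \<delta>"
      using tail_small[OF fi \<delta>] by blast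
    define u where "u v = max (-c) (min c (f v))" for v
    define r where "r v = f v - u v" for v
    have um[measurable]: "u \<in> borel_measurable (borel \<Otimes>\<^sub>M MW)" unfolding u_def by measurable
    have rm[measurable]: "r \<in> borel_measurable (borel \<Otimes>\<^sub>M MW)" unfolding r_def by measurable
    have ub: "\<bar>u v\<bar> \<le> c" for v using c by (auto simp: u_def)
    have rabs: "\<bar>r v\<bar> = max (\<bar>f v\<bar> - c) 0" for v using c by (auto simp: r_def u_def)
    have uz: "fZ (snd v) \<noteq> z \<Longrightarrow> u v = 0" for v using fz[of v] c by (auto simp: u_def)
    have ui: "integrable M (\<lambda>\<omega>. u (V i \<omega>))" for i
      by (rule integrable_const_bound[where B=c]) (auto simp: ub)
    have ri0: "integrable M (\<lambda>\<omega>. r (V 0 \<omega>))" unfolding r_def using fi ui by auto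
    have ri: "integrable M (\<lambda>\<omega>. r (V i \<omega>))" for i using ri0 integrable_V[OF rm, of i] by simp
    have rai: "integrable M (\<lambda>\<omega>. \<bar>r (V i \<omega>)\<bar>)" for i using ri[of i] by auto
    have Er: "expectation (\<lambda>\<omega>. \<bar>r (V i \<omega>)\<bar>) \<le> \<delta>" for i
    proof -
      have "expectation (\<lambda>\<omega>. \<bar>r (V i \<omega>)\<bar>) = expectation (\<lambda>\<omega>. \<bar>r (V 0 \<omega>)\<bar>)"
        by (rule integral_V) measurable
      also have "\<dots> = expectation (\<lambda>\<omega>. max (\<bar>f (V 0 \<omega>)\<bar> - c) 0)" by (simp add: rabs)
      finally show ?thesis using c by simp
    qed
    define \<mu> where "\<mu> = expectation (\<lambda>\<omega>. u (V 0 \<omega>)) / pz"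
    have Eu: "expectation (\<lambda>\<omega>. u (V 0 \<omega>)) = - expectation (\<lambda>\<omega>. r (V 0 \<omega>))"
    proof -
      have "expectation (\<lambda>\<omega>. u (V 0 \<omega>) + r (V 0 \<omega>)) = expectation (\<lambda>\<omega>. u (V 0 \<omega>)) + expectation (\<lambda>\<omega>. r (V 0 \<omega>))"
        by (rule Bochner_Integration.integral_add[OF ui ri0])
      moreover have "(\<lambda>\<omega>. u (V 0 \<omega>) + r (V 0 \<omega>)) = (\<lambda>\<omega>. f (V 0 \<omega>))" by (simp add: r_def)
      ultimately have "expectation (\<lambda>\<omega>. f (V 0 \<omega>)) = expectation (\<lambda>\<omega>. u (V 0 \<omega>)) + expectation (\<lambda>\<omega>. r (V 0 \<omega>))" by simp
      then show ?thesis using f0 by simp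
    qed
    have \<mu>b: "\<bar>\<mu>\<bar> \<le> e / 6"
    proof -
      have "\<bar>expectation (\<lambda>\<omega>. r (V 0 \<omega>))\<bar> \<le> expectation (\<lambda>\<omega>. \<bar>r (V 0 \<omega>)\<bar>)"
        by (rule integral_abs_bound)
      also have "\<dots> \<le> \<delta>" by (rule Er)
      also have "\<dots> \<le> pz * e / 6" by (simp add: \<delta>_def)
      finally have "\<bar>expectation (\<lambda>\<omega>. u (V 0 \<omega>))\<bar> \<le> pz * e / 6" using Eu by simp
      then show ?thesis using pz by (simp add: \<mu>_def abs_div divide_le_eq mult.commute)
    qed
    define ind where "ind v = (if fZ (snd v) = z then 1 else 0 :: real)" for v :: "(real^'k) \<times> 'w"
    have indm[measurable]: "ind \<in> borel_measurable (borel \<Otimes>\<^sub>M MW)" unfolding ind_def by measurable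
    have Eind: "expectation (\<lambda>\<omega>. ind (V 0 \<omega>)) = pz"
    proof -
      have Em: "{\<omega>\<in>space M. fZ (W 0 \<omega>) = z} \<in> sets M" by measurable
      have "expectation (\<lambda>\<omega>. ind (V 0 \<omega>)) = expectation (indicator {\<omega>\<in>space M. fZ (W 0 \<omega>) = z})"
        by (rule Bochner_Integration.integral_cong) (auto simp: ind_def V_def indicator_def)
      then show ?thesis using Em by (simp add: pz_def)
    qed
    have indi: "integrable M (\<lambda>\<omega>. ind (V 0 \<omega>))"
      by (rule integrable_const_bound[where B=1]) (auto simp: ind_def)
    define K where "K v = u v - \<mu> * ind v" for v
    have Km[measurable]: "K \<in> borel_measurable (borel \<Otimes>\<^sub>M MW)" unfolding K_def by measurable
    have Kb: "\<bar>K v\<bar> \<le> c + \<bar>\<mu>\<bar>" for v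
    proof -
      have "\<bar>K v\<bar> \<le> \<bar>u v\<bar> + \<bar>\<mu>\<bar> * \<bar>ind v\<bar>" unfolding K_def by (metis abs_mult abs_triangle_ineq4)
      also have "\<dots> \<le> c + \<bar>\<mu>\<bar>" using ub[of v] by (auto simp: ind_def)
      finally show ?thesis .
    qed
    have Kz: "fZ (snd v) \<noteq> z \<Longrightarrow> K v = 0" for v using uz[of v] by (simp add: K_def ind_def)
    have K0: "expectation (\<lambda>\<omega>. K (V 0 \<omega>)) = 0"
    proof -
      have "expectation (\<lambda>\<omega>. K (V 0 \<omega>)) = expectation (\<lambda>\<omega>. u (V 0 \<omega>)) - \<mu> * expectation (\<lambda>\<omega>. ind (V 0 \<omega>))"
        unfolding K_def using ui indi by simp
      then show ?thesis using pz by (simp add: Eind \<mu>_def)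
    qed
    define A where "A n \<omega> = (1 / real n) * (\<Sum>i<n. (if I n i \<omega> = t then 1 else 0) * K (V i \<omega>))" for n \<omega>
    define R where "R n \<omega> = (1 / real n) * (\<Sum>i<n. \<bar>r (V i \<omega>)\<bar>)" for n \<omega>
    have Am[measurable]: "A n \<in> borel_measurable M" for n unfolding A_def by (rule sumT_meas) measurable
    have Rm[measurable]: "R n \<in> borel_measurable M" for n unfolding R_def by measurable
    have SAR: "\<bar>S n \<omega>\<bar> \<le> \<bar>A n \<omega>\<bar> + R n \<omega> + \<bar>\<mu>\<bar>" for n \<omega>
    proof (cases "n = 0")
      case True then show ?thesis by (simp add: S_def A_def R_def)
    next
      case False
      define T where "T i = (if I n i \<omega> = t then 1 else 0 :: real)" for i
      have T01: "0 \<le> T i" "T i \<le> 1" for i by (auto simp: T_def)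
      have dec: "(\<Sum>i<n. T i * f (V i \<omega>)) = (\<Sum>i<n. T i * K (V i \<omega>)) + (\<Sum>i<n. T i * r (V i \<omega>)) + \<mu> * (\<Sum>i<n. T i * ind (V i \<omega>))"
        by (simp add: K_def r_def sum.distrib[symmetric] sum_distrib_left algebra_simps)
      have b1: "\<bar>\<Sum>i<n. T i * r (V i \<omega>)\<bar> \<le> (\<Sum>i<n. \<bar>r (V i \<omega>)\<bar>)"
      proof -
        have "\<bar>\<Sum>i<n. T i * r (V i \<omega>)\<bar> \<le> (\<Sum>i<n. \<bar>T i * r (V i \<omega>)\<bar>)" by (rule sum_abs)
        also have "\<dots> \<le> (\<Sum>i<n. \<bar>r (V i \<omega>)\<bar>)"
          using T01 by (intro sum_mono) (auto simp: abs_mult intro!: mult_left_le_one_le)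
        finally show ?thesis .
      qed
      have b2: "\<bar>\<Sum>i<n. T i * ind (V i \<omega>)\<bar> \<le> real n"
      proof -
        have "\<bar>\<Sum>i<n. T i * ind (V i \<omega>)\<bar> \<le> (\<Sum>i<n. \<bar>T i * ind (V i \<omega>)\<bar>)" by (rule sum_abs)
        also have "\<dots> \<le> (\<Sum>i<n. 1)"
          using T01 by (intro sum_mono) (auto simp: abs_mult ind_def)
        finally show ?thesis by simp
      qed
      have "\<bar>\<Sum>i<n. T i * f (V i \<omega>)\<bar> \<le> \<bar>\<Sum>i<n. T i * K (V i \<omega>)\<bar> + (\<Sum>i<n. \<bar>r (V i \<omega>)\<bar>) + \<bar>\<mu>\<bar> * real n"
      proof -
        have "\<bar>\<Sum>i<n. T i * f (V i \<omega>)\<bar> \<le> \<bar>\<Sum>i<n. T i * K (V i \<omega>)\<bar> + \<bar>\<Sum>i<n. T i * r (V i \<omega>)\<bar> + \<bar>\<mu>\<bar> * \<bar>\<Sum>i<n. T i * ind (V i \<omega>)\<bar>"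
          unfolding dec by (rule abs3)
        also have "\<dots> \<le> \<bar>\<Sum>i<n. T i * K (V i \<omega>)\<bar> + (\<Sum>i<n. \<bar>r (V i \<omega>)\<bar>) + \<bar>\<mu>\<bar> * real n"
          using b1 b2 by (intro add_mono mult_left_mono) auto
        finally show ?thesis .
      qed
      then have "\<bar>\<Sum>i<n. T i * f (V i \<omega>)\<bar> / real n \<le> (\<bar>\<Sum>i<n. T i * K (V i \<omega>)\<bar> + (\<Sum>i<n. \<bar>r (V i \<omega>)\<bar>) + \<bar>\<mu>\<bar> * real n) / real n"
        by (rule divide_right_mono) simp
      also have "\<dots> = \<bar>\<Sum>i<n. T i * K (V i \<omega>)\<bar> / real n + (\<Sum>i<n. \<bar>r (V i \<omega>)\<bar>) / real n + \<bar>\<mu>\<bar>"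
        using False by (simp add: add_divide_distrib)
      also have "\<bar>\<Sum>i<n. T i * K (V i \<omega>)\<bar> / real n = \<bar>A n \<omega>\<bar>"
        by (simp add: A_def T_def abs_mult)
      also have "(\<Sum>i<n. \<bar>r (V i \<omega>)\<bar>) / real n = R n \<omega>"
        by (simp add: R_def)
      also have "\<bar>\<Sum>i<n. T i * f (V i \<omega>)\<bar> / real n = \<bar>S n \<omega>\<bar>"
        by (simp add: S_def T_def abs_mult)
      finally show ?thesis .
    qed
    have Aconv: "conv_in_prob M A 0"
    proof -
      define U where "U n i \<omega> = (if i < n then (if I n i \<omega> = t then 1 else 0) * K (V i \<omega>) else 0)" for n i \<omega>
      have Um: "U n i \<in> borel_measurable M" for n i
        unfolding U_def by (cases "i < n") (auto intro!: borel_measurable_times T_meas)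
      have Ub: "\<bar>U n i \<omega>\<bar> \<le> c + \<bar>\<mu>\<bar>" for n i \<omega>
        using Kb[of "V i \<omega>"] c by (auto simp: U_def)
      have Uo: "expectation (\<lambda>\<omega>. U n i \<omega> * U n j \<omega>) = 0" if "i < n" "j < n" "i \<noteq> j" for n i j
        using orth[OF Km _ Kz K0 that, where B = "c + \<bar>\<mu>\<bar>" and t = t] Kb that by (simp add: U_def)
      have "conv_in_prob M (\<lambda>n \<omega>. (1 / real n) * (\<Sum>i<n. U n i \<omega>)) 0"
        by (rule orth_avg[OF Um Ub Uo])
      moreover have "(\<lambda>n \<omega>. (1 / real n) * (\<Sum>i<n. U n i \<omega>)) = A"
        by (auto simp: A_def U_def fun_eq_iff)
      ultimately show ?thesis by simp
    qed
    have ev1: "eventually (\<lambda>n. measure M {\<omega>\<in>space M. dist (A n \<omega>) 0 > e/3} \<le> \<eta>/2) sequentially"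
    proof -
      have "(\<lambda>n. measure M {\<omega>\<in>space M. dist (A n \<omega>) 0 > e/3}) \<longlonglongrightarrow> 0"
        using Aconv e unfolding conv_in_prob_def by (auto dest!: spec[of _ "e/3"])
      then have "eventually (\<lambda>n. measure M {\<omega>\<in>space M. dist (A n \<omega>) 0 > e/3} < \<eta>/2) sequentially"
        using \<eta> by (intro order_tendstoD(2)) auto
      then show ?thesis by eventually_elim auto
    qed
    have b2: "measure M {\<omega>\<in>space M. R n \<omega> \<ge> e/3} \<le> \<eta>/2" for n
    proof -
      have Ri: "integrable M (R n)" unfolding R_def[abs_def] using rai by auto
      have ER: "expectation (R n) \<le> \<delta>"
      proof (cases "n = 0")
        case True then show ?thesis using \<delta> by (simp add: R_def[abs_def])
      next
        case False
        have "expectation (R n) = (1 / real n) * (\<Sum>i<n. expectation (\<lambda>\<omega>. \<bar>r (V i \<omega>)\<bar>))"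
          unfolding R_def[abs_def] using rai by (simp add: Bochner_Integration.integral_sum)
        also have "\<dots> \<le> (1 / real n) * (\<Sum>i<n. \<delta>)"
          by (intro mult_left_mono sum_mono Er) auto
        also have "\<dots> = \<delta>" using False by simp
        finally show ?thesis .
      qed
      have "measure M {\<omega>\<in>space M. R n \<omega> \<ge> e/3} \<le> expectation (R n) / (e/3)"
        by (rule integral_Markov_inequality_measure[OF Ri]) (use e in \<open>auto simp: R_def\<close>)
      also have "\<dots> \<le> \<delta> / (e/3)" using ER e by (intro divide_right_mono) auto
      also have "\<dots> \<le> \<eta>/2"
      proof -
        have "\<delta> \<le> \<eta> * e / 12" by (simp add: \<delta>_def)
        then show ?thesis using e \<delta> by (simp add: field_simps)
      qed
      finally show ?thesis .
    qed
    show "eventually (\<lambda>n. measure M {\<omega>\<in>space M. dist (S n \<omega>) 0 > e} \<le> \<eta>) sequentially"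
      using ev1
    proof eventually_elim
      case (elim n)
      have sub: "{\<omega>\<in>space M. dist (S n \<omega>) 0 > e} \<subseteq> {\<omega>\<in>space M. dist (A n \<omega>) 0 > e/3} \<union> {\<omega>\<in>space M. R n \<omega> \<ge> e/3}"
      proof safe
        fix \<omega> assume a: "\<omega> \<in> space M" "dist (S n \<omega>) 0 > e" "\<not> R n \<omega> \<ge> e/3"
        show "dist (A n \<omega>) 0 > e/3"
        proof (rule ccontr)
          assume "\<not> dist (A n \<omega>) 0 > e/3"
          then have "\<bar>S n \<omega>\<bar> \<le> e/3 + e/3 + e/6" using SAR[of n \<omega>] a \<mu>b by simp
          then show False using a e by simp
        qed
      qed
      have "measure M {\<omega>\<in>space M. dist (S n \<omega>) 0 > e} \<le> measure M ({\<omega>\<in>space M. dist (A n \<omega>) 0 > e/3} \<union> {\<omega>\<in>space M. R n \<omega> \<ge> e/3})"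
        by (rule finite_measure_mono[OF sub]) measurable
      also have "\<dots> \<le> measure M {\<omega>\<in>space M. dist (A n \<omega>) 0 > e/3} + measure M {\<omega>\<in>space M. R n \<omega> \<ge> e/3}"
        by (rule measure_Un_le) measurable
      also have "\<dots> \<le> \<eta>/2 + \<eta>/2" using elim b2[of n] by (intro add_mono) auto
      finally show ?case by simp
    qed
  qed simp
qed

end

lemma cip_ev_cong:
  assumes "conv_in_prob M f c" "\<And>n. g n \<in> borel_measurable M"
    and "\<And>n \<omega>. n \<ge> 1 \<Longrightarrow> \<omega> \<in> space M \<Longrightarrow> f n \<omega> = g n \<omega>"
  shows "conv_in_prob M g c"
  unfolding conv_in_prob_def
proof (intro conjI allI impI assms(2))
  fix e :: real assume "e > 0"
  then have l: "(\<lambda>n. measure M {\<omega> \<in> space M. dist (f n \<omega>) c > e}) \<longlonglongrightarrow> 0"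
    using assms(1) unfolding conv_in_prob_def by auto
  have "{\<omega> \<in> space M. dist (f n \<omega>) c > e} = {\<omega> \<in> space M. dist (g n \<omega>) c > e}" if "n \<ge> 1" for n
  proof (rule Collect_cong)
    fix \<omega> show "(\<omega> \<in> space M \<and> dist (f n \<omega>) c > e) = (\<omega> \<in> space M \<and> dist (g n \<omega>) c > e)"
      using assms(3)[OF that, of \<omega>] by auto
  qed
  then have "eventually (\<lambda>n. measure M {\<omega> \<in> space M. dist (f n \<omega>) c > e} = measure M {\<omega> \<in> space M. dist (g n \<omega>) c > e}) sequentially"
    unfolding eventually_sequentially by (intro exI[of _ 1]) auto
  then have "((\<lambda>n. measure M {\<omega> \<in> space M. dist (f n \<omega>) c > e}) \<longlongrightarrow> 0) sequentially \<longleftrightarrow> ((\<lambda>n. measure M {\<omega> \<in> space M. dist (g n \<omega>) c > e}) \<longlongrightarrow> 0) sequentially"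
    by (rule tendsto_cong)
  with l show "(\<lambda>n. measure M {\<omega> \<in> space M. dist (g n \<omega>) c > e}) \<longlonglongrightarrow> 0" by blast
qed

lemma real_card_filter: "real (card {i. i < (n::nat) \<and> P i}) = (\<Sum>i<n. if P i then 1 else 0)"
proof -
  have "{i. i < n \<and> P i} = {i\<in>{..<n}. P i}" by auto
  moreover have "real (card {i\<in>{..<n}. P i}) = (\<Sum>i\<in>{i\<in>{..<n}. P i}. 1)" by (rule real_of_card)
  moreover have "\<dots> = (\<Sum>i<n. if P i then 1 else 0)" using sum.inter_filter[of "{..<n}" "\<lambda>_. 1::real" P] by simp
  ultimately show ?thesis by simp
qed

lemma aux_div: "x = S - real n * p \<Longrightarrow> (1 / real n) * x + p = S / real n" if "n \<ge> 1" for n :: nat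
  using that by (simp add: field_simps)

lemma aux_div': "n \<ge> 1 \<Longrightarrow> x = S - real n * p \<Longrightarrow> (1 / real n) * x + p = S / real n"
  by (rule aux_div)

context setting begin

lemma NZ:
  fixes z :: 'z
  shows "conv_in_prob M (\<lambda>n \<omega>. real (card {i. i < n \<and> fZ (W i \<omega>) = z}) / real n) (prob {\<omega>\<in>space M. fZ (W 0 \<omega>) = z})"
proof -
  define p where "p = prob {\<omega>\<in>space M. fZ (W 0 \<omega>) = z}"
  have p01: "0 \<le> p" "p \<le> 1" by (auto simp: p_def)
  define U where "U n i \<omega> = (if fZ (W i \<omega>) = z then 1 else 0) - p" for n :: nat and i \<omega>
  have Um: "U n i \<in> borel_measurable M" for n i unfolding U_def by measurable
  have Ub: "\<bar>U n i \<omega>\<bar> \<le> 1" for n i \<omega> using p01 by (auto simp: U_def)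
  have Uo: "expectation (\<lambda>\<omega>. U n i \<omega> * U n j \<omega>) = 0" if "i < n" "j < n" "i \<noteq> j" for n i j
    using orth_Z[OF that(3), of z] by (simp add: U_def p_def)
  have c0: "conv_in_prob M (\<lambda>n \<omega>. (1 / real n) * (\<Sum>i<n. U n i \<omega>)) 0"
    by (rule orth_avg[OF Um Ub Uo])
  have c1': "conv_in_prob M (\<lambda>n \<omega>. (\<lambda>x. x + p) ((1 / real n) * (\<Sum>i<n. U n i \<omega>))) ((\<lambda>x. x + p) 0)"
  proof (rule cip_cmt[OF _ c0])
    show "finite_measure M" by unfold_locales
    show "isCont (\<lambda>x. x + p) 0" by (intro continuous_intros)
    show "\<And>n. (\<lambda>\<omega>. (1 / real n) * (\<Sum>i<n. U n i \<omega>) + p) \<in> borel_measurable M"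
      unfolding U_def by measurable
  qed
  then have c1: "conv_in_prob M (\<lambda>n \<omega>. (1 / real n) * (\<Sum>i<n. U n i \<omega>) + p) p" by simp
  show ?thesis unfolding p_def[symmetric]
  proof (rule cip_ev_cong[OF c1])
    show "\<And>n. (\<lambda>\<omega>. real (card {i. i < n \<and> fZ (W i \<omega>) = z}) / real n) \<in> borel_measurable M"
      unfolding real_card_filter by measurable
    fix n :: nat and \<omega> assume "n \<ge> 1"
    have "(\<Sum>i<n. U n i \<omega>) = (\<Sum>i<n. if fZ (W i \<omega>) = z then 1 else 0) - real n * p"
      by (simp add: U_def sum_subtractf)
    then show "(1 / real n) * (\<Sum>i<n. U n i \<omega>) + p = real (card {i. i < n \<and> fZ (W i \<omega>) = z}) / real n"
      unfolding real_card_filter using \<open>n \<ge> 1\<close> by (intro aux_div')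
  qed
qed

lemma NT:
  assumes z: "z \<in> Zs"
  shows "conv_in_prob M (\<lambda>n \<omega>. real (card (samp (\<lambda>i. I n i \<omega>) (\<lambda>i. fZ (W i \<omega>)) n t z)) / real n)
           (\<pi> t * prob {\<omega>\<in>space M. fZ (W 0 \<omega>) = z})"
proof -
  define p where "p = prob {\<omega>\<in>space M. fZ (W 0 \<omega>) = z}"
  define a where "a n \<omega> = real (card (samp (\<lambda>i. I n i \<omega>) (\<lambda>i. fZ (W i \<omega>)) n t z))" for n \<omega>
  define b where "b n \<omega> = real (card {i. i < n \<and> fZ (W i \<omega>) = z})" for n \<omega>
  have cD: "conv_in_prob M (\<lambda>n \<omega>. (a n \<omega> - \<pi> t * b n \<omega>) / b n \<omega>) 0"
    using C3_D[OF z, of t] by (simp add: a_def b_def)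
  have cN: "conv_in_prob M (\<lambda>n \<omega>. b n \<omega> / real n) p"
    using NZ[of z] by (simp add: b_def p_def)
  have cP: "conv_in_prob M (\<lambda>n \<omega>. ((a n \<omega> - \<pi> t * b n \<omega>) / b n \<omega>, b n \<omega> / real n)) (0, p)"
    by (rule cip_pair[OF _ cD cN]) unfold_locales
  have mD[measurable]: "(\<lambda>\<omega>. (a n \<omega> - \<pi> t * b n \<omega>) / b n \<omega>) \<in> borel_measurable M" for n
    using cD unfolding conv_in_prob_def by blast
  have mN[measurable]: "(\<lambda>\<omega>. b n \<omega> / real n) \<in> borel_measurable M" for n
    using cN unfolding conv_in_prob_def by blast
  have c2: "conv_in_prob M (\<lambda>n \<omega>. (\<lambda>q. fst q * snd q + \<pi> t * snd q) ((a n \<omega> - \<pi> t * b n \<omega>) / b n \<omega>, b n \<omega> / real n))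
      ((\<lambda>q. fst q * snd q + \<pi> t * snd q) (0, p))"
  proof (rule cip_cmt[OF _ cP])
    show "finite_measure M" by unfold_locales
    show "isCont (\<lambda>q. fst q * snd q + \<pi> t * snd q) (0, p)" by (intro continuous_intros)
    show "\<And>n. (\<lambda>\<omega>. (\<lambda>q. fst q * snd q + \<pi> t * snd q) ((a n \<omega> - \<pi> t * b n \<omega>) / b n \<omega>, b n \<omega> / real n)) \<in> borel_measurable M"
      by (simp only: fst_conv snd_conv) (intro borel_measurable_add borel_measurable_times borel_measurable_const mD mN)
  qed
  have eq: "(\<lambda>q. fst q * snd q + \<pi> t * snd q) ((a n \<omega> - \<pi> t * b n \<omega>) / b n \<omega>, b n \<omega> / real n) = a n \<omega> / real n" for n \<omega>
  proof -
    have sub: "samp (\<lambda>i. I n i \<omega>) (\<lambda>i. fZ (W i \<omega>)) n t z \<subseteq> {i. i < n \<and> fZ (W i \<omega>) = z}"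
      by (auto simp: samp_def)
    have "card (samp (\<lambda>i. I n i \<omega>) (\<lambda>i. fZ (W i \<omega>)) n t z) \<le> card {i. i < n \<and> fZ (W i \<omega>) = z}"
      by (rule card_mono[OF _ sub]) auto
    then have ab: "a n \<omega> \<le> b n \<omega>" by (simp add: a_def b_def)
    have a0: "a n \<omega> \<ge> 0" by (simp add: a_def)
    show ?thesis
    proof (cases "b n \<omega> = 0")
      case True then show ?thesis using ab a0 by simp
    next
      case False then show ?thesis by (simp add: divide_simps)
    qed
  qed
  show ?thesis using c2 unfolding eq by (simp add: a_def p_def)
qed

lemma CL:
  fixes g :: "(real^'k) \<times> 'w \<Rightarrow> real"
  assumes gm[measurable]: "g \<in> borel_measurable (borel \<Otimes>\<^sub>M MW)"
    and gi: "integrable M (\<lambda>\<omega>. g (V 0 \<omega>))"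
    and z: "z \<in> Zs"
    and p: "prob {\<omega>\<in>space M. fZ (W 0 \<omega>) = z} > 0"
  shows "conv_in_prob M (\<lambda>n \<omega>. (1 / real n) * (\<Sum>i<n. if I n i \<omega> = t \<and> fZ (W i \<omega>) = z then g (V i \<omega>) else 0))
           (\<pi> t * expectation (\<lambda>\<omega>. if fZ (W 0 \<omega>) = z then g (V 0 \<omega>) else 0))"
proof -
  define pz where "pz = prob {\<omega>\<in>space M. fZ (W 0 \<omega>) = z}"
  define ind where "ind v = (if fZ (snd v) = z then 1 else 0 :: real)" for v :: "(real^'k) \<times> 'w"
  have indm[measurable]: "ind \<in> borel_measurable (borel \<Otimes>\<^sub>M MW)" unfolding ind_def by measurable
  define G where "G = expectation (\<lambda>\<omega>. if fZ (W 0 \<omega>) = z then g (V 0 \<omega>) else 0)"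
  define m where "m = G / pz"
  define f where "f v = ind v * (g v - m)" for v
  have fm[measurable]: "f \<in> borel_measurable (borel \<Otimes>\<^sub>M MW)" unfolding f_def by measurable
  have indi: "integrable M (\<lambda>\<omega>. ind (V 0 \<omega>))"
    by (rule integrable_const_bound[where B=1]) (auto simp: ind_def)
  have igi: "integrable M (\<lambda>\<omega>. ind (V 0 \<omega>) * g (V 0 \<omega>))"
    by (rule Bochner_Integration.integrable_bound[OF gi]) (auto simp: ind_def)
  have Eind: "expectation (\<lambda>\<omega>. ind (V 0 \<omega>)) = pz"
  proof -
    have Em: "{\<omega>\<in>space M. fZ (W 0 \<omega>) = z} \<in> sets M" by measurable
    have "expectation (\<lambda>\<omega>. ind (V 0 \<omega>)) = expectation (indicator {\<omega>\<in>space M. fZ (W 0 \<omega>) = z})"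
      by (rule Bochner_Integration.integral_cong) (auto simp: ind_def V_def indicator_def)
    then show ?thesis using Em by (simp add: pz_def)
  qed
  have EG: "expectation (\<lambda>\<omega>. ind (V 0 \<omega>) * g (V 0 \<omega>)) = G"
    unfolding G_def by (rule Bochner_Integration.integral_cong) (auto simp: ind_def V_def)
  have fi: "integrable M (\<lambda>\<omega>. f (V 0 \<omega>))"
    unfolding f_def using igi indi by (simp add: right_diff_distrib)
  have f0: "expectation (\<lambda>\<omega>. f (V 0 \<omega>)) = 0"
  proof -
    have "expectation (\<lambda>\<omega>. f (V 0 \<omega>)) = expectation (\<lambda>\<omega>. ind (V 0 \<omega>) * g (V 0 \<omega>)) - m * expectation (\<lambda>\<omega>. ind (V 0 \<omega>))"
      unfolding f_def using igi indi by (simp add: right_diff_distrib mult.commute)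
    then show ?thesis using p by (simp add: EG Eind m_def pz_def)
  qed
  have fz: "fZ (snd v) \<noteq> z \<Longrightarrow> f v = 0" for v by (simp add: f_def ind_def)
  have c1: "conv_in_prob M (\<lambda>n \<omega>. (1 / real n) * (\<Sum>i<n. (if I n i \<omega> = t then 1 else 0) * f (V i \<omega>))) 0"
    by (rule TH[OF fm fi fz f0 p])
  have c2: "conv_in_prob M (\<lambda>n \<omega>. real (card (samp (\<lambda>i. I n i \<omega>) (\<lambda>i. fZ (W i \<omega>)) n t z)) / real n) (\<pi> t * pz)"
    using NT[OF z, of t] by (simp add: pz_def)
  have cP: "conv_in_prob M (\<lambda>n \<omega>. ((1 / real n) * (\<Sum>i<n. (if I n i \<omega> = t then 1 else 0) * f (V i \<omega>)),
       real (card (samp (\<lambda>i. I n i \<omega>) (\<lambda>i. fZ (W i \<omega>)) n t z)) / real n)) (0, \<pi> t * pz)"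
    by (rule cip_pair[OF _ c1 c2]) unfold_locales
  have m1[measurable]: "(\<lambda>\<omega>. (1 / real n) * (\<Sum>i<n. (if I n i \<omega> = t then 1 else 0) * f (V i \<omega>))) \<in> borel_measurable M" for n
    using c1 unfolding conv_in_prob_def by blast
  have m2[measurable]: "(\<lambda>\<omega>. real (card (samp (\<lambda>i. I n i \<omega>) (\<lambda>i. fZ (W i \<omega>)) n t z)) / real n) \<in> borel_measurable M" for n
    using c2 unfolding conv_in_prob_def by blast
  have c3: "conv_in_prob M (\<lambda>n \<omega>. (\<lambda>q. fst q + m * snd q) ((1 / real n) * (\<Sum>i<n. (if I n i \<omega> = t then 1 else 0) * f (V i \<omega>)),
       real (card (samp (\<lambda>i. I n i \<omega>) (\<lambda>i. fZ (W i \<omega>)) n t z)) / real n)) ((\<lambda>q. fst q + m * snd q) (0, \<pi> t * pz))"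
  proof (rule cip_cmt[OF _ cP])
    show "finite_measure M" by unfold_locales
    show "isCont (\<lambda>q. fst q + m * snd q) (0, \<pi> t * pz)" by (intro continuous_intros)
    show "\<And>n. (\<lambda>\<omega>. (\<lambda>q. fst q + m * snd q) ((1 / real n) * (\<Sum>i<n. (if I n i \<omega> = t then 1 else 0) * f (V i \<omega>)),
       real (card (samp (\<lambda>i. I n i \<omega>) (\<lambda>i. fZ (W i \<omega>)) n t z)) / real n)) \<in> borel_measurable M"
      by (simp only: fst_conv snd_conv) (intro borel_measurable_add borel_measurable_times borel_measurable_const m1 m2)
  qed
  have eq: "(\<lambda>q. fst q + m * snd q) ((1 / real n) * (\<Sum>i<n. (if I n i \<omega> = t then 1 else 0) * f (V i \<omega>)),
       real (card (samp (\<lambda>i. I n i \<omega>) (\<lambda>i. fZ (W i \<omega>)) n t z)) / real n)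
      = (1 / real n) * (\<Sum>i<n. if I n i \<omega> = t \<and> fZ (W i \<omega>) = z then g (V i \<omega>) else 0)" for n \<omega>
  proof -
    have cs: "real (card (samp (\<lambda>i. I n i \<omega>) (\<lambda>i. fZ (W i \<omega>)) n t z)) = (\<Sum>i<n. if I n i \<omega> = t \<and> fZ (W i \<omega>) = z then 1 else 0)"
      unfolding samp_def by (rule real_card_filter)
    have "(\<Sum>i<n. (if I n i \<omega> = t then 1 else 0) * f (V i \<omega>)) + m * (\<Sum>i<n. if I n i \<omega> = t \<and> fZ (W i \<omega>) = z then 1 else 0)
        = (\<Sum>i<n. if I n i \<omega> = t \<and> fZ (W i \<omega>) = z then g (V i \<omega>) else 0)"
      unfolding sum_distrib_left sum.distrib[symmetric]
      by (intro sum.cong refl) (auto simp: f_def ind_def V_def algebra_simps)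
    then show ?thesis unfolding cs by (simp add: divide_simps)
  qed
  have lim: "(\<lambda>q. fst q + m * snd q) (0, \<pi> t * pz) = \<pi> t * G"
    using p by (simp add: m_def pz_def)
  show ?thesis using c3 unfolding eq lim G_def .
qed

end

lemma cip_add:
  fixes f g :: "nat \<Rightarrow> 'a \<Rightarrow> 'b::{real_normed_vector,second_countable_topology}"
  assumes P: "finite_measure M" and cf: "conv_in_prob M f c" and cg: "conv_in_prob M g d"
  shows "conv_in_prob M (\<lambda>n \<omega>. f n \<omega> + g n \<omega>) (c + d)"
proof -
  have fm[measurable]: "\<And>n. f n \<in> borel_measurable M" using cf unfolding conv_in_prob_def by auto
  have gm[measurable]: "\<And>n. g n \<in> borel_measurable M" using cg unfolding conv_in_prob_def by auto
  have "conv_in_prob M (\<lambda>n \<omega>. (\<lambda>q. fst q + snd q) (f n \<omega>, g n \<omega>)) ((\<lambda>q. fst q + snd q) (c, d))"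
    by (rule cip_cmt[OF P cip_pair[OF P cf cg]]) (auto intro!: continuous_intros)
  then show ?thesis by simp
qed

lemma cip_sum:
  fixes f :: "'i \<Rightarrow> nat \<Rightarrow> 'a \<Rightarrow> 'b::{real_normed_vector,second_countable_topology}"
  assumes P: "finite_measure M" and S: "finite S" and cf: "\<And>l. l \<in> S \<Longrightarrow> conv_in_prob M (f l) (c l)"
  shows "conv_in_prob M (\<lambda>n \<omega>. \<Sum>l\<in>S. f l n \<omega>) (\<Sum>l\<in>S. c l)"
  using S cf
proof (induction S rule: finite_induct)
  case empty then show ?case using cip_const[OF P, of 0] by simp
next
  case (insert x F)
  then have "conv_in_prob M (\<lambda>n \<omega>. f x n \<omega> + (\<Sum>l\<in>F. f l n \<omega>)) (c x + (\<Sum>l\<in>F. c l))"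
    by (intro cip_add[OF P]) auto
  then show ?case using insert by simp
qed

lemma cip_inv0:
  fixes A :: "nat \<Rightarrow> 'a \<Rightarrow> real^'n^'n" and b :: "nat \<Rightarrow> 'a \<Rightarrow> real^'n"
  assumes P: "finite_measure M" and cA: "conv_in_prob M A A0" and cb: "conv_in_prob M b b0"
    and d: "det A0 \<noteq> 0"
  shows "conv_in_prob M (\<lambda>n \<omega>. inv0 (A n \<omega>) *v b n \<omega>) (inv0 A0 *v b0)"
proof -
  have Am[measurable]: "\<And>n. A n \<in> borel_measurable M" using cA unfolding conv_in_prob_def by auto
  have bm[measurable]: "\<And>n. b n \<in> borel_measurable M" using cb unfolding conv_in_prob_def by auto
  have "conv_in_prob M (\<lambda>n \<omega>. (\<lambda>p. inv0 (fst p) *v snd p) (A n \<omega>, b n \<omega>)) ((\<lambda>p. inv0 (fst p) *v snd p) (A0, b0))"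
  proof (rule cip_cmt[OF P cip_pair[OF P cA cb]])
    show "isCont (\<lambda>p. inv0 (fst p) *v snd p) (A0, b0)" by (rule isCont_inv0[OF d])
    fix n
    have "(\<lambda>\<omega>. (A n \<omega>, b n \<omega>)) \<in> borel_measurable M" by measurable
    from measurable_compose[OF this inv0_meas]
    show "(\<lambda>\<omega>. (\<lambda>p. inv0 (fst p) *v snd p) (A n \<omega>, b n \<omega>)) \<in> borel_measurable M" by simp
  qed
  then show ?thesis by simp
qed

lemma outer_tendsto[tendsto_intros]:
  assumes "(f \<longlongrightarrow> a) F" "(g \<longlongrightarrow> b) F"
  shows "((\<lambda>x. outer (f x) (g x)) \<longlongrightarrow> outer a b) F"
  unfolding outer_def by (intro tendsto_vec_lambda tendsto_intros assms)

lemma outer_nth[simp]: "outer x y $ i $ j = x $ i * y $ j"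
  by (simp add: outer_def)

lemma integral_vec_nth:
  fixes f :: "'a \<Rightarrow> 'b::euclidean_space^'n"
  assumes "integrable M f"
  shows "(integral\<^sup>L M f) $ i = integral\<^sup>L M (\<lambda>\<omega>. f \<omega> $ i)"
  using integral_bounded_linear[OF bounded_linear_vec_nth assms, of i] by simp

lemma integrable_vec:
  fixes f :: "'a \<Rightarrow> 'b::euclidean_space^'n"
  assumes i: "\<And>a. integrable M (\<lambda>\<omega>. f \<omega> $ a)"
  shows "integrable M f"
proof (rule integrable_norm_cancel)
  show fm: "f \<in> borel_measurable M" using i by (intro meas_vec) auto
  show "integrable M (\<lambda>x. norm (f x))"
  proof (rule Bochner_Integration.integrable_bound)
    show "integrable M (\<lambda>\<omega>. \<Sum>a\<in>UNIV. norm (f \<omega> $ a))" using i by auto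
    show "(\<lambda>x. norm (f x)) \<in> borel_measurable M" using fm by measurable
    show "AE x in M. norm (norm (f x)) \<le> norm (\<Sum>a\<in>UNIV. norm (f x $ a))"
    proof (intro AE_I2)
      fix x
      have "norm (f x) \<le> (\<Sum>a\<in>UNIV. norm (f x $ a))" unfolding norm_vec_def by (rule L2_set_le_sum) simp
      moreover have "0 \<le> (\<Sum>a\<in>UNIV. norm (f x $ a))" by (intro sum_nonneg) simp
      ultimately show "norm (norm (f x)) \<le> norm (\<Sum>a\<in>UNIV. norm (f x $ a))" by simp
    qed
  qed
qed

lemma sum_center_prod:
  fixes x y :: "nat \<Rightarrow> real"
  shows "(\<Sum>i\<in>S. (x i - mx) * (y i - my))
       = (\<Sum>i\<in>S. x i * y i) - (\<Sum>i\<in>S. x i) * my - mx * (\<Sum>i\<in>S. y i) + real (card S) * (mx * my)"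
proof -
  have "(\<Sum>i\<in>S. (x i - mx) * (y i - my)) = (\<Sum>i\<in>S. x i * y i - x i * my - mx * y i + mx * my)"
    by (intro sum.cong) (auto simp: algebra_simps)
  also have "\<dots> = (\<Sum>i\<in>S. x i * y i) - (\<Sum>i\<in>S. x i * my) - (\<Sum>i\<in>S. mx * y i) + (\<Sum>i\<in>S. mx * my)"
    by (simp add: sum.distrib sum_subtractf)
  also have "\<dots> = (\<Sum>i\<in>S. x i * y i) - (\<Sum>i\<in>S. x i) * my - mx * (\<Sum>i\<in>S. y i) + real (card S) * (mx * my)"
    by (simp add: sum_distrib_left sum_distrib_right)
  finally show ?thesis .
qed

lemma sum_center_lin:
  fixes x y :: "nat \<Rightarrow> real"
  shows "(\<Sum>i\<in>S. y i * (x i - m)) = (\<Sum>i\<in>S. y i * x i) - (\<Sum>i\<in>S. y i) * m"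
  by (simp add: right_diff_distrib sum_subtractf sum_distrib_right)

lemma Sxx_nth:
  assumes fin: "finite S"
  shows "Sxx X S $ a $ b =
   (\<Sum>i\<in>S. X i $ a * X i $ b) - (1 / real (card S)) * ((\<Sum>j\<in>S. X j $ a) * (\<Sum>j\<in>S. X j $ b))"
proof -
  define c where "c = real (card S)"
  define A where "A = (\<Sum>j\<in>S. X j $ a)"
  define B where "B = (\<Sum>j\<in>S. X j $ b)"
  have "Sxx X S $ a $ b = (\<Sum>i\<in>S. (X i $ a - A / c) * (X i $ b - B / c))"
    by (simp add: Sxx_def xbar_def A_def B_def c_def)
  also have "\<dots> = (\<Sum>i\<in>S. X i $ a * X i $ b) - A * (B / c) - (A / c) * B + c * ((A / c) * (B / c))"
    unfolding sum_center_prod by (simp add: A_def B_def c_def)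
  also have "\<dots> = (\<Sum>i\<in>S. X i $ a * X i $ b) - (1 / c) * (A * B)"
  proof (cases "c = 0")
    case True then show ?thesis by simp
  next
    case False then show ?thesis by (simp add: field_simps power2_eq_square)
  qed
  finally show ?thesis by (simp add: A_def B_def c_def)
qed

lemma Sxy_nth:
  assumes fin: "finite S"
  shows "Sxy X Y S $ a =
   (\<Sum>i\<in>S. Y i * X i $ a) - ((\<Sum>j\<in>S. Y j) / real (card S)) * (\<Sum>j\<in>S. X j $ a)"
proof -
  define c where "c = real (card S)"
  define A where "A = (\<Sum>j\<in>S. X j $ a)"
  have "Sxy X Y S $ a = (\<Sum>i\<in>S. Y i * (X i $ a - A / c))"
    by (simp add: Sxy_def xbar_def A_def c_def)
  also have "\<dots> = (\<Sum>i\<in>S. Y i * X i $ a) - (\<Sum>i\<in>S. Y i) * (A / c)"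
    by (rule sum_center_lin)
  finally show ?thesis by (simp add: A_def c_def)
qed


lemma continuous_outer[continuous_intros]:
  "continuous F f \<Longrightarrow> continuous F g \<Longrightarrow> continuous F (\<lambda>x. outer (f x) (g x))"
  unfolding continuous_def by (intro outer_tendsto)

lemma (in prob_space) integrable_sq_bound:
  fixes f h :: "'a \<Rightarrow> real"
  assumes h: "integrable M (\<lambda>\<omega>. (h \<omega>)\<^sup>2)" and f: "f \<in> borel_measurable M"
    and b: "\<And>\<omega>. \<omega> \<in> space M \<Longrightarrow> \<bar>f \<omega>\<bar> \<le> \<bar>h \<omega>\<bar>"
  shows "integrable M f"
proof (rule Bochner_Integration.integrable_bound[where f="\<lambda>\<omega>. 1 + (h \<omega>)\<^sup>2"])
  show "integrable M (\<lambda>\<omega>. 1 + (h \<omega>)\<^sup>2)" using h by auto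
  show "AE x in M. norm (f x) \<le> norm (1 + (h x)\<^sup>2)"
  proof (intro AE_I2)
    fix x assume x: "x \<in> space M"
    have "\<bar>h x\<bar> \<le> 1 + (h x)\<^sup>2"
    proof (cases "\<bar>h x\<bar> \<le> 1")
      case True then show ?thesis using zero_le_power2[of "h x"] by linarith
    next
      case False
      then have "\<bar>h x\<bar> * 1 \<le> \<bar>h x\<bar> * \<bar>h x\<bar>" by (intro mult_left_mono) auto
      moreover have "\<bar>h x\<bar> * \<bar>h x\<bar> = (h x)\<^sup>2" by (simp add: power2_eq_square)
      ultimately show ?thesis by linarith
    qed
    then show "norm (f x) \<le> norm (1 + (h x)\<^sup>2)" using b[OF x] by simp
  qed
qed (rule f)

lemma alg1: "(N::real) * A - (1 / (N * c)) * ((N * x) * (N * y)) = N * (A - (1 / c) * (x * y))"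
  by (cases "N = 0"; cases "c = 0") (simp_all add: field_simps power2_eq_square)

lemma alg2: "(N::real) * A - (N * y / (N * c)) * (N * x) = N * (A - (y / c) * x)"
  by (cases "N = 0"; cases "c = 0") (simp_all add: field_simps power2_eq_square)

context setting begin

definition qs :: "'z \<Rightarrow> 'k \<Rightarrow> ((real^'k) \<times> 'w \<Rightarrow> real) \<Rightarrow> nat \<Rightarrow> 'a \<Rightarrow> real" where
  "qs z l g n \<omega> = (1 / real n) * (\<Sum>i<n. if I n i \<omega> = l \<and> fZ (W i \<omega>) = z then g (V i \<omega>) else 0)"

lemma qs_meas:
  assumes [measurable]: "g \<in> borel_measurable (borel \<Otimes>\<^sub>M MW)"
  shows "qs z l g n \<in> borel_measurable M"
  unfolding qs_def[abs_def]
proof (intro borel_measurable_times borel_measurable_const borel_measurable_sum)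
  fix i assume "i \<in> {..<n}"
  then have [measurable]: "I n i \<in> measurable M (count_space UNIV)" using I_meas by auto
  show "(\<lambda>\<omega>. if I n i \<omega> = l \<and> fZ (W i \<omega>) = z then g (V i \<omega>) else 0) \<in> borel_measurable M" by measurable
qed

lemma qs_sum: "real n * qs z l g n \<omega> = (\<Sum>i\<in>samp (\<lambda>i. I n i \<omega>) (\<lambda>i. fZ (W i \<omega>)) n l z. g (V i \<omega>))"
proof -
  have S: "samp (\<lambda>i. I n i \<omega>) (\<lambda>i. fZ (W i \<omega>)) n l z = {i\<in>{..<n}. I n i \<omega> = l \<and> fZ (W i \<omega>) = z}"
    by (auto simp: samp_def)
  show ?thesis
  proof (cases "n = 0")
    case True then show ?thesis unfolding S qs_def by simp
  next
    case False
    have "(\<Sum>i\<in>{i\<in>{..<n}. I n i \<omega> = l \<and> fZ (W i \<omega>) = z}. g (V i \<omega>)) = (\<Sum>i<n. if I n i \<omega> = l \<and> fZ (W i \<omega>) = z then g (V i \<omega>) else 0)"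
      by (rule sum.inter_filter) simp
    then show ?thesis unfolding S qs_def using False by simp
  qed
qed

lemma samp_fin: "finite (samp J Zf n l z)"
  by (rule finite_subset[of _ "{..<n}"]) (auto simp: samp_def)

definition qX :: "'z \<Rightarrow> 'k \<Rightarrow> nat \<Rightarrow> 'a \<Rightarrow> real^'p" where
  "qX z l n \<omega> = (\<chi> a. qs z l (\<lambda>v. fX (snd v) $ a) n \<omega>)"
definition qXX :: "'z \<Rightarrow> 'k \<Rightarrow> nat \<Rightarrow> 'a \<Rightarrow> real^'p^'p" where
  "qXX z l n \<omega> = (\<chi> a b. qs z l (\<lambda>v. fX (snd v) $ a * fX (snd v) $ b) n \<omega>)"
definition qYX :: "'z \<Rightarrow> 'k \<Rightarrow> nat \<Rightarrow> 'a \<Rightarrow> real^'p" where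
  "qYX z l n \<omega> = (\<chi> a. qs z l (\<lambda>v. fst v $ l * fX (snd v) $ a) n \<omega>)"
definition Mq :: "'z \<Rightarrow> 'k \<Rightarrow> nat \<Rightarrow> 'a \<Rightarrow> real^'p^'p" where
  "Mq z l n \<omega> = qXX z l n \<omega> - (1 / qs z l (\<lambda>_. 1) n \<omega>) *\<^sub>R outer (qX z l n \<omega>) (qX z l n \<omega>)"
definition vq :: "'z \<Rightarrow> 'k \<Rightarrow> nat \<Rightarrow> 'a \<Rightarrow> real^'p" where
  "vq z l n \<omega> = qYX z l n \<omega> - (qs z l (\<lambda>v. fst v $ l) n \<omega> / qs z l (\<lambda>_. 1) n \<omega>) *\<^sub>R qX z l n \<omega>"

lemma Sxx_q: "Sxx (\<lambda>i. fX (W i \<omega>)) (samp (\<lambda>i. I n i \<omega>) (\<lambda>i. fZ (W i \<omega>)) n l z) = real n *\<^sub>R Mq z l n \<omega>"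
proof -
  define S where "S = samp (\<lambda>i. I n i \<omega>) (\<lambda>i. fZ (W i \<omega>)) n l z"
  have c: "real (card S) = real n * qs z l (\<lambda>_. 1) n \<omega>"
    unfolding qs_sum S_def by simp
  have sX: "(\<Sum>j\<in>S. fX (W j \<omega>) $ a) = real n * qs z l (\<lambda>v. fX (snd v) $ a) n \<omega>" for a
    unfolding qs_sum S_def by (simp add: V_def)
  have sXX: "(\<Sum>j\<in>S. fX (W j \<omega>) $ a * fX (W j \<omega>) $ b) = real n * qs z l (\<lambda>v. fX (snd v) $ a * fX (snd v) $ b) n \<omega>" for a b
    unfolding qs_sum S_def by (simp add: V_def)
  have fin: "finite S" by (simp add: S_def samp_fin)
  have "Sxx (\<lambda>i. fX (W i \<omega>)) S $ a $ b = (real n *\<^sub>R Mq z l n \<omega>) $ a $ b" for a b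
  proof -
    have "Sxx (\<lambda>i. fX (W i \<omega>)) S $ a $ b = real n * qs z l (\<lambda>v. fX (snd v) $ a * fX (snd v) $ b) n \<omega>
       - (1 / (real n * qs z l (\<lambda>_. 1) n \<omega>)) * ((real n * qs z l (\<lambda>v. fX (snd v) $ a) n \<omega>) * (real n * qs z l (\<lambda>v. fX (snd v) $ b) n \<omega>))"
      by (simp only: Sxx_nth[OF fin] c sX sXX)
    also have "\<dots> = real n * (qs z l (\<lambda>v. fX (snd v) $ a * fX (snd v) $ b) n \<omega>
       - (1 / qs z l (\<lambda>_. 1) n \<omega>) * (qs z l (\<lambda>v. fX (snd v) $ a) n \<omega> * qs z l (\<lambda>v. fX (snd v) $ b) n \<omega>))"
      by (rule alg1)
    also have "\<dots> = (real n *\<^sub>R Mq z l n \<omega>) $ a $ b" by (simp add: Mq_def qX_def qXX_def)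
    finally show ?thesis .
  qed
  then show ?thesis unfolding S_def[symmetric] by (simp add: vec_eq_iff)
qed

lemma Sxy_q: "Sxy (\<lambda>i. fX (W i \<omega>)) (\<lambda>i. Y i \<omega> $ I n i \<omega>) (samp (\<lambda>i. I n i \<omega>) (\<lambda>i. fZ (W i \<omega>)) n l z) = real n *\<^sub>R vq z l n \<omega>"
proof -
  define S where "S = samp (\<lambda>i. I n i \<omega>) (\<lambda>i. fZ (W i \<omega>)) n l z"
  have IS: "i \<in> S \<Longrightarrow> I n i \<omega> = l" for i by (simp add: S_def samp_def)
  have c: "real (card S) = real n * qs z l (\<lambda>_. 1) n \<omega>"
    unfolding qs_sum S_def by simp
  have sX: "(\<Sum>j\<in>S. fX (W j \<omega>) $ a) = real n * qs z l (\<lambda>v. fX (snd v) $ a) n \<omega>" for a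
    unfolding qs_sum S_def by (simp add: V_def)
  have sY: "(\<Sum>j\<in>S. Y j \<omega> $ I n j \<omega>) = real n * qs z l (\<lambda>v. fst v $ l) n \<omega>"
    unfolding qs_sum S_def[symmetric] using IS by (auto simp: V_def intro!: sum.cong)
  have sYX: "(\<Sum>j\<in>S. Y j \<omega> $ I n j \<omega> * fX (W j \<omega>) $ a) = real n * qs z l (\<lambda>v. fst v $ l * fX (snd v) $ a) n \<omega>" for a
    unfolding qs_sum S_def[symmetric] using IS by (auto simp: V_def intro!: sum.cong)
  have fin: "finite S" by (simp add: S_def samp_fin)
  have "Sxy (\<lambda>i. fX (W i \<omega>)) (\<lambda>i. Y i \<omega> $ I n i \<omega>) S $ a = (real n *\<^sub>R vq z l n \<omega>) $ a" for a
  proof -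
    have "Sxy (\<lambda>i. fX (W i \<omega>)) (\<lambda>i. Y i \<omega> $ I n i \<omega>) S $ a = real n * qs z l (\<lambda>v. fst v $ l * fX (snd v) $ a) n \<omega>
       - (real n * qs z l (\<lambda>v. fst v $ l) n \<omega> / (real n * qs z l (\<lambda>_. 1) n \<omega>)) * (real n * qs z l (\<lambda>v. fX (snd v) $ a) n \<omega>)"
      by (simp only: Sxy_nth[OF fin] c sX sY sYX)
    also have "\<dots> = real n * (qs z l (\<lambda>v. fst v $ l * fX (snd v) $ a) n \<omega>
       - (qs z l (\<lambda>v. fst v $ l) n \<omega> / qs z l (\<lambda>_. 1) n \<omega>) * qs z l (\<lambda>v. fX (snd v) $ a) n \<omega>)"
      by (rule alg2)
    also have "\<dots> = (real n *\<^sub>R vq z l n \<omega>) $ a" by (simp add: vq_def qX_def qYX_def)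
    finally show ?thesis .
  qed
  then show ?thesis unfolding S_def[symmetric] by (simp add: vec_eq_iff)
qed

lemma q0: "qs z l g 0 \<omega> = 0" by (simp add: qs_def)

lemma est_t: "betahat_t (\<lambda>i. I n i \<omega>) (\<lambda>i. fZ (W i \<omega>)) (\<lambda>i. fX (W i \<omega>)) (\<lambda>i. Y i \<omega> $ I n i \<omega>) n t z
   = inv0 (Mq z t n \<omega>) *v vq z t n \<omega>"
proof (cases "n = 0")
  case True
  then have "vq z t n \<omega> = 0" by (simp add: vq_def qX_def qYX_def q0 vec_eq_iff)
  then show ?thesis using True unfolding betahat_t_def Sxx_q Sxy_q by simp
next
  case False
  then show ?thesis unfolding betahat_t_def Sxx_q Sxy_q by (simp add: inv0_scale)
qed

lemma est_pool: "betahat (\<lambda>i. I n i \<omega>) (\<lambda>i. fZ (W i \<omega>)) (\<lambda>i. fX (W i \<omega>)) (\<lambda>i. Y i \<omega> $ I n i \<omega>) n z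
   = inv0 (\<Sum>l\<in>UNIV. Mq z l n \<omega>) *v (\<Sum>l\<in>UNIV. vq z l n \<omega>)"
proof (cases "n = 0")
  case True
  then have "vq z l n \<omega> = 0" for l by (simp add: vq_def qX_def qYX_def q0 vec_eq_iff)
  then show ?thesis using True unfolding betahat_def Sxx_q Sxy_q by simp
next
  case False
  then show ?thesis unfolding betahat_def Sxx_q Sxy_q scaleR_sum_right[symmetric] by (simp add: inv0_scale)
qed

end

lemma outer_meas[measurable (raw)]:
  fixes f g :: "'a \<Rightarrow> real^'n"
  assumes "f \<in> borel_measurable M" "g \<in> borel_measurable M"
  shows "(\<lambda>x. outer (f x) (g x)) \<in> borel_measurable M"
proof -
  have c: "(\<lambda>q::(real^'n) \<times> (real^'n). outer (fst q) (snd q)) \<in> borel_measurable borel"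
    by (intro borel_measurable_continuous_onI continuous_at_imp_continuous_on ballI)
       (auto intro!: continuous_intros)
  have "(\<lambda>x. (f x, g x)) \<in> borel_measurable M" using assms by measurable
  from measurable_compose[OF this c] show ?thesis by simp
qed

lemma vec_nth_meas[measurable (raw)]:
  fixes f :: "'a \<Rightarrow> 'b::euclidean_space^'n"
  assumes "f \<in> borel_measurable M"
  shows "(\<lambda>x. f x $ i) \<in> borel_measurable M"
proof -
  have "(\<lambda>x::'b^'n. x $ i) \<in> borel_measurable borel"
    by (intro borel_measurable_continuous_onI continuous_on_component continuous_on_id)
  from measurable_compose[OF assms this] show ?thesis .
qed

lemma posdef_det:
  fixes A :: "real^'n^'n"
  assumes "posdef A" shows "det A \<noteq> 0"
proof
  assume "det A = 0"
  then have "\<not> inj ((*v) A)"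
    using det_nz_iff_inj[OF matrix_vector_mul_linear[of A]] by (simp add: matrix_of_matrix_vector_mul)
  then obtain x y where "A *v x = A *v y" "x \<noteq> y" unfolding inj_def by blast
  then have "A *v (x - y) = 0" "x - y \<noteq> 0" by (auto simp: matrix_vector_mult_diff_distrib)
  then show False using assms unfolding posdef_def by (metis inner_zero_right less_irrefl)
qed

context setting begin

definition pz :: "'z \<Rightarrow> real" where "pz z = prob {\<omega>\<in>space M. fZ (W 0 \<omega>) = z}"

definition EG :: "'z \<Rightarrow> ((real^'k) \<times> 'w \<Rightarrow> real) \<Rightarrow> real" where
  "EG z g = expectation (\<lambda>\<omega>. if fZ (W 0 \<omega>) = z then g (V 0 \<omega>) else 0)"

lemma cond_mean_zero:
  assumes "pz z = 0"
  shows "cond_mean M U (\<lambda>\<omega>. fZ (W 0 \<omega>)) z = 0"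
  using assms by (simp add: cond_mean_def pz_def)

lemma pz_pos: assumes z: "z \<in> Zs" shows "pz z > 0"
proof (rule ccontr)
  assume "\<not> pz z > 0"
  moreover have "pz z \<ge> 0" by (simp add: pz_def)
  ultimately have "pz z = 0" by linarith
  then have "cond_var M (\<lambda>\<omega>. fX (W 0 \<omega>)) (\<lambda>\<omega>. fZ (W 0 \<omega>)) z = 0"
    unfolding cond_var_def by (rule cond_mean_zero)
  moreover have "axis undefined (1::real) \<noteq> (0 :: real^'p)" by (simp add: axis_eq_0_iff)
  ultimately show False using var_pd[OF z] unfolding posdef_def by (metis inner_zero_right less_irrefl matrix_vector_mult_0)
qed

lemma intX: "integrable M (\<lambda>\<omega>. fX (W 0 \<omega>) $ a)"
  by (rule integrable_sq_bound[OF X_mom]) (auto simp: component_le_norm_cart)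

lemma intXX: "integrable M (\<lambda>\<omega>. fX (W 0 \<omega>) $ a * fX (W 0 \<omega>) $ b)"
proof (rule Bochner_Integration.integrable_bound[OF X_mom])
  show "AE x in M. norm (fX (W 0 x) $ a * fX (W 0 x) $ b) \<le> norm ((norm (fX (W 0 x)))\<^sup>2)"
    by (intro AE_I2) (auto simp: abs_mult power2_eq_square intro!: mult_mono component_le_norm_cart)
qed measurable

lemma intYX: "integrable M (\<lambda>\<omega>. Y 0 \<omega> $ l * fX (W 0 \<omega>) $ a)"
proof (rule integrable_sq_bound[OF XY_mom[of l]])
  fix \<omega>
  have "\<bar>Y 0 \<omega> $ l * fX (W 0 \<omega>) $ a\<bar> = \<bar>((Y 0 \<omega> $ l) *\<^sub>R fX (W 0 \<omega>)) $ a\<bar>" by simp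
  also have "\<dots> \<le> norm ((Y 0 \<omega> $ l) *\<^sub>R fX (W 0 \<omega>))" by (rule component_le_norm_cart)
  finally show "\<bar>Y 0 \<omega> $ l * fX (W 0 \<omega>) $ a\<bar> \<le> \<bar>norm ((Y 0 \<omega> $ l) *\<^sub>R fX (W 0 \<omega>))\<bar>" by simp
qed measurable

lemma intY: "integrable M (\<lambda>\<omega>. Y 0 \<omega> $ l)"
  by (rule integrable_sq_bound[OF C1_mom[of l]]) auto

lemma conv_qs:
  assumes gm: "g \<in> borel_measurable (borel \<Otimes>\<^sub>M MW)" and gi: "integrable M (\<lambda>\<omega>. g (V 0 \<omega>))" and z: "z \<in> Zs"
  shows "conv_in_prob M (qs z l g) (\<pi> l * EG z g)"
proof -
  have "conv_in_prob M (\<lambda>n \<omega>. (1 / real n) * (\<Sum>i<n. if I n i \<omega> = l \<and> fZ (W i \<omega>) = z then g (V i \<omega>) else 0))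
           (\<pi> l * EG z g)"
    unfolding EG_def by (rule CL[OF gm gi z]) (use pz_pos[OF z] in \<open>simp add: pz_def\<close>)
  then show ?thesis by (simp add: qs_def[abs_def])
qed

lemma EG1: "EG z (\<lambda>_. 1) = pz z"
proof -
  have Em: "{\<omega>\<in>space M. fZ (W 0 \<omega>) = z} \<in> sets M" by measurable
  have "EG z (\<lambda>_. 1) = expectation (indicator {\<omega>\<in>space M. fZ (W 0 \<omega>) = z})"
    unfolding EG_def by (rule Bochner_Integration.integral_cong) (auto simp: indicator_def)
  then show ?thesis using Em by (simp add: pz_def)
qed

definition mX0 :: "'z \<Rightarrow> real^'p" where "mX0 z = (\<chi> a. EG z (\<lambda>v. fX (snd v) $ a))"
definition mXX0 :: "'z \<Rightarrow> real^'p^'p" where "mXX0 z = (\<chi> a b. EG z (\<lambda>v. fX (snd v) $ a * fX (snd v) $ b))"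
definition mYX0 :: "'z \<Rightarrow> 'k \<Rightarrow> real^'p" where "mYX0 z l = (\<chi> a. EG z (\<lambda>v. fst v $ l * fX (snd v) $ a))"
definition mY0 :: "'z \<Rightarrow> 'k \<Rightarrow> real" where "mY0 z l = EG z (\<lambda>v. fst v $ l)"

lemma qX_meas[measurable]: "qX z l n \<in> borel_measurable M"
  unfolding qX_def by (intro meas_vec) (simp add: qs_meas)
lemma qXX_meas[measurable]: "qXX z l n \<in> borel_measurable M"
  unfolding qXX_def by (intro meas_vec) (simp add: qs_meas)
lemma qYX_meas[measurable]: "qYX z l n \<in> borel_measurable M"
  unfolding qYX_def by (intro meas_vec) (simp add: qs_meas)
lemma qs1_meas[measurable]: "qs z l (\<lambda>_. 1) n \<in> borel_measurable M" by (simp add: qs_meas)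
lemma qsY_meas[measurable]: "qs z l (\<lambda>v. fst v $ l') n \<in> borel_measurable M" by (simp add: qs_meas)

lemma conv_qX: "z \<in> Zs \<Longrightarrow> conv_in_prob M (qX z l) (\<pi> l *\<^sub>R mX0 z)"
  by (rule cip_vec) (auto simp: qX_def mX0_def V_def intro!: conv_qs intX, unfold_locales)

lemma conv_qXX: assumes z: "z \<in> Zs" shows "conv_in_prob M (qXX z l) (\<pi> l *\<^sub>R mXX0 z)"
proof (rule cip_vec)
  show "finite_measure M" by unfold_locales
  show "\<And>n. qXX z l n \<in> borel_measurable M" by simp
  fix a
  show "conv_in_prob M (\<lambda>n \<omega>. qXX z l n \<omega> $ a) ((\<pi> l *\<^sub>R mXX0 z) $ a)"
  proof (rule cip_vec)
    show "finite_measure M" by unfold_locales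
    show "\<And>n. (\<lambda>\<omega>. qXX z l n \<omega> $ a) \<in> borel_measurable M" by measurable
    fix b
    show "conv_in_prob M (\<lambda>n \<omega>. qXX z l n \<omega> $ a $ b) ((\<pi> l *\<^sub>R mXX0 z) $ a $ b)"
      using conv_qs[OF _ _ z, of "\<lambda>v. fX (snd v) $ a * fX (snd v) $ b" l] intXX[of a b]
      by (simp add: qXX_def mXX0_def V_def)
  qed
qed

lemma conv_qYX: "z \<in> Zs \<Longrightarrow> conv_in_prob M (qYX z l) (\<pi> l *\<^sub>R mYX0 z l)"
  by (rule cip_vec) (auto simp: qYX_def mYX0_def V_def intro!: conv_qs intYX, unfold_locales)

lemma conv_qY: "z \<in> Zs \<Longrightarrow> conv_in_prob M (qs z l (\<lambda>v. fst v $ l)) (\<pi> l * mY0 z l)"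
  unfolding mY0_def by (rule conv_qs) (auto simp: V_def intY)

lemma conv_q1: "z \<in> Zs \<Longrightarrow> conv_in_prob M (qs z l (\<lambda>_. 1)) (\<pi> l * pz z)"
  unfolding EG1[symmetric] by (rule conv_qs) auto

lemma conv_Mq:
  assumes z: "z \<in> Zs"
  shows "conv_in_prob M (Mq z l)
     (\<pi> l *\<^sub>R mXX0 z - (1 / (\<pi> l * pz z)) *\<^sub>R outer (\<pi> l *\<^sub>R mX0 z) (\<pi> l *\<^sub>R mX0 z))"
proof -
  have P: "finite_measure M" by unfold_locales
  have nz: "\<pi> l * pz z \<noteq> 0" using pi_pos[of l] pz_pos[OF z] by simp
  have c: "conv_in_prob M (\<lambda>n \<omega>. (qs z l (\<lambda>_. 1) n \<omega>, (qXX z l n \<omega>, qX z l n \<omega>)))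
      (\<pi> l * pz z, (\<pi> l *\<^sub>R mXX0 z, \<pi> l *\<^sub>R mX0 z))"
    by (intro cip_pair[OF P] conv_q1 conv_qXX conv_qX z)
  define h where "h q = fst (snd q) - (1 / fst q) *\<^sub>R outer (snd (snd q)) (snd (snd q))"
    for q :: "real \<times> (real^'p^'p) \<times> (real^'p)"
  have "conv_in_prob M (\<lambda>n \<omega>. h (qs z l (\<lambda>_. 1) n \<omega>, (qXX z l n \<omega>, qX z l n \<omega>)))
      (h (\<pi> l * pz z, (\<pi> l *\<^sub>R mXX0 z, \<pi> l *\<^sub>R mX0 z)))"
  proof (rule cip_cmt[OF P c])
    show "isCont h (\<pi> l * pz z, \<pi> l *\<^sub>R mXX0 z, \<pi> l *\<^sub>R mX0 z)"
      unfolding h_def using nz by (intro continuous_intros) auto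
    show "\<And>n. (\<lambda>\<omega>. h (qs z l (\<lambda>_. 1) n \<omega>, qXX z l n \<omega>, qX z l n \<omega>)) \<in> borel_measurable M"
      unfolding h_def by simp
  qed
  then show ?thesis by (simp add: h_def Mq_def[abs_def])
qed

lemma conv_vq:
  assumes z: "z \<in> Zs"
  shows "conv_in_prob M (vq z l)
     (\<pi> l *\<^sub>R mYX0 z l - ((\<pi> l * mY0 z l) / (\<pi> l * pz z)) *\<^sub>R (\<pi> l *\<^sub>R mX0 z))"
proof -
  have P: "finite_measure M" by unfold_locales
  have nz: "\<pi> l * pz z \<noteq> 0" using pi_pos[of l] pz_pos[OF z] by simp
  have c: "conv_in_prob M (\<lambda>n \<omega>. (qs z l (\<lambda>_. 1) n \<omega>, (qYX z l n \<omega>, (qs z l (\<lambda>v. fst v $ l) n \<omega>, qX z l n \<omega>))))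
      (\<pi> l * pz z, (\<pi> l *\<^sub>R mYX0 z l, (\<pi> l * mY0 z l, \<pi> l *\<^sub>R mX0 z)))"
    by (intro cip_pair[OF P] conv_q1 conv_qYX conv_qY conv_qX z)
  define h where "h q = fst (snd q) - (fst (snd (snd q)) / fst q) *\<^sub>R snd (snd (snd q))"
    for q :: "real \<times> (real^'p) \<times> real \<times> (real^'p)"
  have "conv_in_prob M (\<lambda>n \<omega>. h (qs z l (\<lambda>_. 1) n \<omega>, (qYX z l n \<omega>, (qs z l (\<lambda>v. fst v $ l) n \<omega>, qX z l n \<omega>))))
      (h (\<pi> l * pz z, (\<pi> l *\<^sub>R mYX0 z l, (\<pi> l * mY0 z l, \<pi> l *\<^sub>R mX0 z))))"
  proof (rule cip_cmt[OF P c])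
    show "isCont h (\<pi> l * pz z, (\<pi> l *\<^sub>R mYX0 z l, (\<pi> l * mY0 z l, \<pi> l *\<^sub>R mX0 z)))"
      unfolding h_def using nz by (intro continuous_intros) auto
    show "\<And>n. (\<lambda>\<omega>. h (qs z l (\<lambda>_. 1) n \<omega>, (qYX z l n \<omega>, (qs z l (\<lambda>v. fst v $ l) n \<omega>, qX z l n \<omega>)))) \<in> borel_measurable M"
      unfolding h_def by simp
  qed
  then show ?thesis by (simp add: h_def vq_def[abs_def])
qed

lemma EG_ind:
  assumes gm: "g \<in> borel_measurable (borel \<Otimes>\<^sub>M MW)"
  shows "EG z g = expectation (\<lambda>\<omega>. indicator {\<omega>\<in>space M. fZ (W 0 \<omega>) = z} \<omega> * g (V 0 \<omega>))"
  unfolding EG_def by (rule Bochner_Integration.integral_cong) (auto simp: indicator_def)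

lemma cond_formulas:
  assumes z: "z \<in> Zs"
  shows "cond_var M (\<lambda>\<omega>. fX (W 0 \<omega>)) (\<lambda>\<omega>. fZ (W 0 \<omega>)) z
           = (1 / pz z) *\<^sub>R (mXX0 z - (1 / pz z) *\<^sub>R outer (mX0 z) (mX0 z))"
    and "cond_cov M (\<lambda>\<omega>. fX (W 0 \<omega>)) (\<lambda>\<omega>. Y 0 \<omega> $ l) (\<lambda>\<omega>. fZ (W 0 \<omega>)) z
           = (1 / pz z) *\<^sub>R (mYX0 z l - (mY0 z l / pz z) *\<^sub>R mX0 z)"
proof -
  define E where "E = {\<omega>\<in>space M. fZ (W 0 \<omega>) = z}"
  have Em[measurable]: "E \<in> sets M" unfolding E_def by measurable
  define p where "p = pz z"
  have pE: "measure M E = p" by (simp add: E_def p_def pz_def)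
  have p0: "p \<noteq> 0" using pz_pos[OF z] by (simp add: p_def)
  define X where "X \<omega> = fX (W 0 \<omega>)" for \<omega>
  define Yl where "Yl \<omega> = Y 0 \<omega> $ l" for \<omega>
  define ind where "ind \<omega> = (indicator E \<omega> :: real)" for \<omega>
  have iI: "integrable M ind" unfolding ind_def using Em by (auto simp: emeasure_eq_measure)
  have iX: "integrable M (\<lambda>\<omega>. ind \<omega> * X \<omega> $ a)" for a
    using integrable_real_mult_indicator[OF Em intX[of a]] by (simp add: ind_def X_def mult.commute)
  have iXX: "integrable M (\<lambda>\<omega>. ind \<omega> * (X \<omega> $ a * X \<omega> $ b))" for a b
    using integrable_real_mult_indicator[OF Em intXX[of a b]] by (simp add: ind_def X_def mult.commute)
  have iY: "integrable M (\<lambda>\<omega>. ind \<omega> * Yl \<omega>)"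
    using integrable_real_mult_indicator[OF Em intY[of l]] by (simp add: ind_def Yl_def mult.commute)
  have iYX: "integrable M (\<lambda>\<omega>. ind \<omega> * (Yl \<omega> * X \<omega> $ a))" for a
    using integrable_real_mult_indicator[OF Em intYX[of l a]] by (simp add: ind_def Yl_def X_def mult.commute)
  have eX: "expectation (\<lambda>\<omega>. ind \<omega> * X \<omega> $ a) = mX0 z $ a" for a
    by (simp add: mX0_def EG_ind ind_def X_def E_def V_def)
  have eXX: "expectation (\<lambda>\<omega>. ind \<omega> * (X \<omega> $ a * X \<omega> $ b)) = mXX0 z $ a $ b" for a b
    by (simp add: mXX0_def EG_ind ind_def X_def E_def V_def)
  have eY: "expectation (\<lambda>\<omega>. ind \<omega> * Yl \<omega>) = mY0 z l"
    by (simp add: mY0_def EG_ind ind_def Yl_def E_def V_def)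
  have eYX: "expectation (\<lambda>\<omega>. ind \<omega> * (Yl \<omega> * X \<omega> $ a)) = mYX0 z l $ a" for a
    by (simp add: mYX0_def EG_ind ind_def Yl_def X_def E_def V_def)
  have eI: "expectation ind = p" unfolding ind_def using Em pE by simp
  define \<mu> where "\<mu> = cond_mean M X (\<lambda>\<omega>. fZ (W 0 \<omega>)) z"
  have iXv: "integrable M (\<lambda>\<omega>. indicator E \<omega> *\<^sub>R X \<omega>)"
    by (rule integrable_vec) (use iX in \<open>simp add: ind_def\<close>)
  have \<mu>a: "\<mu> $ a = mX0 z $ a / p" for a
  proof -
    have "\<mu> $ a = (1 / p) * (integral\<^sup>L M (\<lambda>\<omega>. indicator E \<omega> *\<^sub>R X \<omega>)) $ a"
      by (simp add: \<mu>_def cond_mean_def E_def[symmetric] pE)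
    also have "\<dots> = (1 / p) * expectation (\<lambda>\<omega>. ind \<omega> * X \<omega> $ a)"
      by (simp add: integral_vec_nth[OF iXv] ind_def)
    finally show ?thesis by (simp add: eX)
  qed
  define \<mu>Y where "\<mu>Y = cond_mean M Yl (\<lambda>\<omega>. fZ (W 0 \<omega>)) z"
  have \<mu>Y: "\<mu>Y = mY0 z l / p"
    by (simp add: \<mu>Y_def cond_mean_def E_def[symmetric] pE eY[symmetric] ind_def)
  show "cond_var M (\<lambda>\<omega>. fX (W 0 \<omega>)) (\<lambda>\<omega>. fZ (W 0 \<omega>)) z
           = (1 / pz z) *\<^sub>R (mXX0 z - (1 / pz z) *\<^sub>R outer (mX0 z) (mX0 z))"
  proof -
    have comp: "(\<lambda>\<omega>. ind \<omega> * ((X \<omega> $ a - \<mu> $ a) * (X \<omega> $ b - \<mu> $ b)))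
       = (\<lambda>\<omega>. ind \<omega> * (X \<omega> $ a * X \<omega> $ b) - \<mu> $ b * (ind \<omega> * X \<omega> $ a) - \<mu> $ a * (ind \<omega> * X \<omega> $ b) + (\<mu> $ a * \<mu> $ b) * ind \<omega>)" for a b
      by (auto simp: algebra_simps)
    have icomp: "integrable M (\<lambda>\<omega>. ind \<omega> * ((X \<omega> $ a - \<mu> $ a) * (X \<omega> $ b - \<mu> $ b)))" for a b
      unfolding comp using iXX iX iI by auto
    have ecomp: "expectation (\<lambda>\<omega>. ind \<omega> * ((X \<omega> $ a - \<mu> $ a) * (X \<omega> $ b - \<mu> $ b)))
       = mXX0 z $ a $ b - mX0 z $ a * mX0 z $ b / p" for a b
    proof -
      have "expectation (\<lambda>\<omega>. ind \<omega> * ((X \<omega> $ a - \<mu> $ a) * (X \<omega> $ b - \<mu> $ b)))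
        = mXX0 z $ a $ b - \<mu> $ b * mX0 z $ a - \<mu> $ a * mX0 z $ b + (\<mu> $ a * \<mu> $ b) * p"
        unfolding comp using iXX iX iI by (simp add: eXX eX eI)
      also have "\<dots> = mXX0 z $ a $ b - mX0 z $ a * mX0 z $ b / p"
        using p0 by (simp add: \<mu>a field_simps power2_eq_square)
      finally show ?thesis .
    qed
    have iV: "integrable M (\<lambda>\<omega>. indicator E \<omega> *\<^sub>R outer (X \<omega> - \<mu>) (X \<omega> - \<mu>))"
    proof (rule integrable_vec)
      fix a show "integrable M (\<lambda>\<omega>. (indicator E \<omega> *\<^sub>R outer (X \<omega> - \<mu>) (X \<omega> - \<mu>)) $ a)"
      proof (rule integrable_vec)
        fix b show "integrable M (\<lambda>\<omega>. (indicator E \<omega> *\<^sub>R outer (X \<omega> - \<mu>) (X \<omega> - \<mu>)) $ a $ b)"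
          using icomp[of a b] by (simp add: ind_def)
      qed
    qed
    have "cond_var M (\<lambda>\<omega>. fX (W 0 \<omega>)) (\<lambda>\<omega>. fZ (W 0 \<omega>)) z $ a $ b
        = ((1 / pz z) *\<^sub>R (mXX0 z - (1 / pz z) *\<^sub>R outer (mX0 z) (mX0 z))) $ a $ b" for a b
    proof -
      have "cond_var M (\<lambda>\<omega>. fX (W 0 \<omega>)) (\<lambda>\<omega>. fZ (W 0 \<omega>)) z $ a $ b
          = (1 / p) * (integral\<^sup>L M (\<lambda>\<omega>. indicator E \<omega> *\<^sub>R outer (X \<omega> - \<mu>) (X \<omega> - \<mu>))) $ a $ b"
        by (simp add: cond_var_def cond_mean_def E_def[symmetric] pE X_def[abs_def] \<mu>_def[unfolded X_def])
      also have "\<dots> = (1 / p) * expectation (\<lambda>\<omega>. ind \<omega> * ((X \<omega> $ a - \<mu> $ a) * (X \<omega> $ b - \<mu> $ b)))"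
      proof -
        have iVa: "integrable M (\<lambda>\<omega>. (indicator E \<omega> *\<^sub>R outer (X \<omega> - \<mu>) (X \<omega> - \<mu>)) $ a)"
          using iV by (rule integrable_bounded_linear[OF bounded_linear_vec_nth])
        have s1: "(integral\<^sup>L M (\<lambda>\<omega>. indicator E \<omega> *\<^sub>R outer (X \<omega> - \<mu>) (X \<omega> - \<mu>))) $ a $ b
          = (integral\<^sup>L M (\<lambda>\<omega>. (indicator E \<omega> *\<^sub>R outer (X \<omega> - \<mu>) (X \<omega> - \<mu>)) $ a)) $ b"
          by (simp only: integral_vec_nth[OF iV])
        also have "\<dots> = integral\<^sup>L M (\<lambda>\<omega>. (indicator E \<omega> *\<^sub>R outer (X \<omega> - \<mu>) (X \<omega> - \<mu>)) $ a $ b)"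
          by (rule integral_vec_nth[OF iVa])
        also have "\<dots> = expectation (\<lambda>\<omega>. ind \<omega> * ((X \<omega> $ a - \<mu> $ a) * (X \<omega> $ b - \<mu> $ b)))"
          by (simp add: ind_def)
        finally show ?thesis by simp
      qed
      also have "\<dots> = ((1 / pz z) *\<^sub>R (mXX0 z - (1 / pz z) *\<^sub>R outer (mX0 z) (mX0 z))) $ a $ b"
        by (simp add: ecomp p_def)
      finally show ?thesis .
    qed
    then show ?thesis by (simp add: vec_eq_iff)
  qed
  show "cond_cov M (\<lambda>\<omega>. fX (W 0 \<omega>)) (\<lambda>\<omega>. Y 0 \<omega> $ l) (\<lambda>\<omega>. fZ (W 0 \<omega>)) z
           = (1 / pz z) *\<^sub>R (mYX0 z l - (mY0 z l / pz z) *\<^sub>R mX0 z)"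
  proof -
    have comp: "(\<lambda>\<omega>. ind \<omega> * ((Yl \<omega> - \<mu>Y) * (X \<omega> $ a - \<mu> $ a)))
       = (\<lambda>\<omega>. ind \<omega> * (Yl \<omega> * X \<omega> $ a) - \<mu> $ a * (ind \<omega> * Yl \<omega>) - \<mu>Y * (ind \<omega> * X \<omega> $ a) + (\<mu>Y * \<mu> $ a) * ind \<omega>)" for a
      by (auto simp: algebra_simps)
    have icomp: "integrable M (\<lambda>\<omega>. ind \<omega> * ((Yl \<omega> - \<mu>Y) * (X \<omega> $ a - \<mu> $ a)))" for a
      unfolding comp using iYX iY iX iI by auto
    have ecomp: "expectation (\<lambda>\<omega>. ind \<omega> * ((Yl \<omega> - \<mu>Y) * (X \<omega> $ a - \<mu> $ a)))
       = mYX0 z l $ a - mY0 z l * mX0 z $ a / p" for a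
    proof -
      have "expectation (\<lambda>\<omega>. ind \<omega> * ((Yl \<omega> - \<mu>Y) * (X \<omega> $ a - \<mu> $ a)))
        = mYX0 z l $ a - \<mu> $ a * mY0 z l - \<mu>Y * mX0 z $ a + (\<mu>Y * \<mu> $ a) * p"
        unfolding comp using iYX iY iX iI by (simp add: eYX eY eX eI)
      also have "\<dots> = mYX0 z l $ a - mY0 z l * mX0 z $ a / p"
        using p0 by (simp add: \<mu>a \<mu>Y field_simps power2_eq_square)
      finally show ?thesis .
    qed
    have iV: "integrable M (\<lambda>\<omega>. indicator E \<omega> *\<^sub>R ((Yl \<omega> - \<mu>Y) *\<^sub>R (X \<omega> - \<mu>)))"
    proof (rule integrable_vec)
      fix a show "integrable M (\<lambda>\<omega>. (indicator E \<omega> *\<^sub>R ((Yl \<omega> - \<mu>Y) *\<^sub>R (X \<omega> - \<mu>))) $ a)"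
        using icomp[of a] by (simp add: ind_def mult.assoc)
    qed
    have "cond_cov M (\<lambda>\<omega>. fX (W 0 \<omega>)) (\<lambda>\<omega>. Y 0 \<omega> $ l) (\<lambda>\<omega>. fZ (W 0 \<omega>)) z $ a
        = ((1 / pz z) *\<^sub>R (mYX0 z l - (mY0 z l / pz z) *\<^sub>R mX0 z)) $ a" for a
    proof -
      have "cond_cov M (\<lambda>\<omega>. fX (W 0 \<omega>)) (\<lambda>\<omega>. Y 0 \<omega> $ l) (\<lambda>\<omega>. fZ (W 0 \<omega>)) z $ a
          = (1 / p) * (integral\<^sup>L M (\<lambda>\<omega>. indicator E \<omega> *\<^sub>R ((Yl \<omega> - \<mu>Y) *\<^sub>R (X \<omega> - \<mu>)))) $ a"
        by (simp add: cond_cov_def cond_mean_def E_def[symmetric] pE X_def[abs_def] Yl_def[abs_def] \<mu>_def[unfolded X_def] \<mu>Y_def[unfolded Yl_def])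
      also have "\<dots> = (1 / p) * expectation (\<lambda>\<omega>. ind \<omega> * ((Yl \<omega> - \<mu>Y) * (X \<omega> $ a - \<mu> $ a)))"
      proof -
        have "(integral\<^sup>L M (\<lambda>\<omega>. indicator E \<omega> *\<^sub>R ((Yl \<omega> - \<mu>Y) *\<^sub>R (X \<omega> - \<mu>)))) $ a
          = integral\<^sup>L M (\<lambda>\<omega>. (indicator E \<omega> *\<^sub>R ((Yl \<omega> - \<mu>Y) *\<^sub>R (X \<omega> - \<mu>))) $ a)"
          by (rule integral_vec_nth[OF iV])
        also have "\<dots> = expectation (\<lambda>\<omega>. ind \<omega> * ((Yl \<omega> - \<mu>Y) * (X \<omega> $ a - \<mu> $ a)))"
          by (simp add: ind_def mult.assoc)
        finally show ?thesis by simp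
      qed
      also have "\<dots> = ((1 / pz z) *\<^sub>R (mYX0 z l - (mY0 z l / pz z) *\<^sub>R mX0 z)) $ a"
        by (simp add: ecomp p_def)
      finally show ?thesis .
    qed
    then show ?thesis by (simp add: vec_eq_iff)
  qed
qed

end

context setting begin

theorem main:
  "\<forall>z\<in>Zs. \<forall>t.
     conv_in_prob M
       (\<lambda>n \<omega>. betahat_t (\<lambda>i. I n i \<omega>) (\<lambda>i. fZ (W i \<omega>)) (\<lambda>i. fX (W i \<omega>)) (\<lambda>i. Y i \<omega> $ I n i \<omega>) n t z)
       (matrix_inv (cond_var M (\<lambda>\<omega>. fX (W 0 \<omega>)) (\<lambda>\<omega>. fZ (W 0 \<omega>)) z)
          *v cond_cov M (\<lambda>\<omega>. fX (W 0 \<omega>)) (\<lambda>\<omega>. Y 0 \<omega> $ t) (\<lambda>\<omega>. fZ (W 0 \<omega>)) z)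
   \<and> conv_in_prob M
       (\<lambda>n \<omega>. betahat (\<lambda>i. I n i \<omega>) (\<lambda>i. fZ (W i \<omega>)) (\<lambda>i. fX (W i \<omega>)) (\<lambda>i. Y i \<omega> $ I n i \<omega>) n z)
       (\<Sum>l\<in>UNIV. \<pi> l *\<^sub>R (matrix_inv (cond_var M (\<lambda>\<omega>. fX (W 0 \<omega>)) (\<lambda>\<omega>. fZ (W 0 \<omega>)) z)
          *v cond_cov M (\<lambda>\<omega>. fX (W 0 \<omega>)) (\<lambda>\<omega>. Y 0 \<omega> $ l) (\<lambda>\<omega>. fZ (W 0 \<omega>)) z))"
proof (intro ballI allI conjI)
  fix z t assume z: "z \<in> Zs"
  have P: "finite_measure M" by unfold_locales
  define \<Sigma> where "\<Sigma> = cond_var M (\<lambda>\<omega>. fX (W 0 \<omega>)) (\<lambda>\<omega>. fZ (W 0 \<omega>)) z"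
  define cv where "cv l = cond_cov M (\<lambda>\<omega>. fX (W 0 \<omega>)) (\<lambda>\<omega>. Y 0 \<omega> $ l) (\<lambda>\<omega>. fZ (W 0 \<omega>)) z" for l
  define p where "p = pz z"
  have p0: "p > 0" using pz_pos[OF z] by (simp add: p_def)
  have dS: "det \<Sigma> \<noteq> 0" unfolding \<Sigma>_def by (rule posdef_det[OF var_pd[OF z]])
  have invS: "invertible \<Sigma>" using dS invertible_det_nz by blast
  have dscale: "det (r *\<^sub>R \<Sigma>) \<noteq> 0" if "r \<noteq> 0" for r
    using scalar_invertible[OF that invS] invertible_det_nz by blast
  have Mlim: "\<pi> l *\<^sub>R mXX0 z - (1 / (\<pi> l * pz z)) *\<^sub>R outer (\<pi> l *\<^sub>R mX0 z) (\<pi> l *\<^sub>R mX0 z) = (\<pi> l * p) *\<^sub>R \<Sigma>" for l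
  proof -
    have "\<pi> l \<noteq> 0" using pi_pos[of l] by simp
    then show ?thesis using p0 unfolding \<Sigma>_def cond_formulas(1)[OF z] p_def
      by (simp add: vec_eq_iff field_simps power2_eq_square)
  qed
  have vlim: "\<pi> l *\<^sub>R mYX0 z l - ((\<pi> l * mY0 z l) / (\<pi> l * pz z)) *\<^sub>R (\<pi> l *\<^sub>R mX0 z) = (\<pi> l * p) *\<^sub>R cv l" for l
  proof -
    have "\<pi> l \<noteq> 0" using pi_pos[of l] by simp
    then show ?thesis using p0 unfolding cv_def cond_formulas(2)[OF z] p_def
      by (simp add: vec_eq_iff field_simps power2_eq_square)
  qed
  have cM: "conv_in_prob M (Mq z l) ((\<pi> l * p) *\<^sub>R \<Sigma>)" for l using conv_Mq[OF z, of l] by (simp add: Mlim)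
  have cV: "conv_in_prob M (vq z l) ((\<pi> l * p) *\<^sub>R cv l)" for l using conv_vq[OF z, of l] by (simp only: vlim)
  have pit: "\<pi> t * p \<noteq> 0" using pi_pos[of t] p0 by simp
  have "conv_in_prob M (\<lambda>n \<omega>. inv0 (Mq z t n \<omega>) *v vq z t n \<omega>) (inv0 ((\<pi> t * p) *\<^sub>R \<Sigma>) *v ((\<pi> t * p) *\<^sub>R cv t))"
    by (rule cip_inv0[OF P cM cV dscale[OF pit]])
  moreover have "inv0 ((\<pi> t * p) *\<^sub>R \<Sigma>) *v ((\<pi> t * p) *\<^sub>R cv t) = matrix_inv \<Sigma> *v cv t"
    by (simp only: inv0_scale[OF pit]) (simp add: inv0_def invS)
  ultimately have "conv_in_prob M (\<lambda>n \<omega>. inv0 (Mq z t n \<omega>) *v vq z t n \<omega>) (matrix_inv \<Sigma> *v cv t)"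
    by simp
  then show "conv_in_prob M
       (\<lambda>n \<omega>. betahat_t (\<lambda>i. I n i \<omega>) (\<lambda>i. fZ (W i \<omega>)) (\<lambda>i. fX (W i \<omega>)) (\<lambda>i. Y i \<omega> $ I n i \<omega>) n t z)
       (matrix_inv (cond_var M (\<lambda>\<omega>. fX (W 0 \<omega>)) (\<lambda>\<omega>. fZ (W 0 \<omega>)) z)
          *v cond_cov M (\<lambda>\<omega>. fX (W 0 \<omega>)) (\<lambda>\<omega>. Y 0 \<omega> $ t) (\<lambda>\<omega>. fZ (W 0 \<omega>)) z)"
    by (simp add: est_t \<Sigma>_def cv_def)
  have cMs: "conv_in_prob M (\<lambda>n \<omega>. \<Sum>l\<in>UNIV. Mq z l n \<omega>) (\<Sum>l\<in>UNIV. (\<pi> l * p) *\<^sub>R \<Sigma>)"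
    by (rule cip_sum[OF P]) (auto intro: cM)
  have cVs: "conv_in_prob M (\<lambda>n \<omega>. \<Sum>l\<in>UNIV. vq z l n \<omega>) (\<Sum>l\<in>UNIV. (\<pi> l * p) *\<^sub>R cv l)"
    by (rule cip_sum[OF P]) (auto intro: cV)
  have s1: "(\<Sum>l\<in>UNIV. (\<pi> l * p) *\<^sub>R \<Sigma>) = p *\<^sub>R \<Sigma>"
    by (simp add: scaleR_sum_left[symmetric] sum_distrib_right[symmetric] pi_sum)
  have s2: "(\<Sum>l\<in>UNIV. (\<pi> l * p) *\<^sub>R cv l) = p *\<^sub>R (\<Sum>l\<in>UNIV. \<pi> l *\<^sub>R cv l)"
    by (simp add: scaleR_sum_right mult.commute)
  have p0': "p \<noteq> 0" using p0 by simp
  have "conv_in_prob M (\<lambda>n \<omega>. inv0 (\<Sum>l\<in>UNIV. Mq z l n \<omega>) *v (\<Sum>l\<in>UNIV. vq z l n \<omega>))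
      (inv0 (p *\<^sub>R \<Sigma>) *v (p *\<^sub>R (\<Sum>l\<in>UNIV. \<pi> l *\<^sub>R cv l)))"
    using cip_inv0[OF P cMs cVs] dscale[OF p0'] unfolding s1 s2 by blast
  moreover have "inv0 (p *\<^sub>R \<Sigma>) *v (p *\<^sub>R (\<Sum>l\<in>UNIV. \<pi> l *\<^sub>R cv l)) = (\<Sum>l\<in>UNIV. \<pi> l *\<^sub>R (matrix_inv \<Sigma> *v cv l))"
  proof -
    have "inv0 (p *\<^sub>R \<Sigma>) *v (p *\<^sub>R (\<Sum>l\<in>UNIV. \<pi> l *\<^sub>R cv l)) = matrix_inv \<Sigma> *v (\<Sum>l\<in>UNIV. \<pi> l *\<^sub>R cv l)"
      by (simp only: inv0_scale[OF p0']) (simp add: inv0_def invS)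
    also have "\<dots> = (\<Sum>l\<in>UNIV. \<pi> l *\<^sub>R (matrix_inv \<Sigma> *v cv l))"
      by (simp add: linear_sum[OF matrix_vector_mul_linear] matrix_vector_mult_scaleR o_def)
    finally show ?thesis .
  qed
  ultimately show "conv_in_prob M
       (\<lambda>n \<omega>. betahat (\<lambda>i. I n i \<omega>) (\<lambda>i. fZ (W i \<omega>)) (\<lambda>i. fX (W i \<omega>)) (\<lambda>i. Y i \<omega> $ I n i \<omega>) n z)
       (\<Sum>l\<in>UNIV. \<pi> l *\<^sub>R (matrix_inv (cond_var M (\<lambda>\<omega>. fX (W 0 \<omega>)) (\<lambda>\<omega>. fZ (W 0 \<omega>)) z)
          *v cond_cov M (\<lambda>\<omega>. fX (W 0 \<omega>)) (\<lambda>\<omega>. Y 0 \<omega> $ l) (\<lambda>\<omega>. fZ (W 0 \<omega>)) z))"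
    by (simp add: est_pool \<Sigma>_def cv_def)
qed

end

theorem lemma1:
  fixes M :: "'a measure"
    and MW :: "'w measure"
    and Y :: "nat \<Rightarrow> 'a \<Rightarrow> real^'k"
    and W :: "nat \<Rightarrow> 'a \<Rightarrow> 'w"
    and fZ :: "'w \<Rightarrow> 'z"
    and fX :: "'w \<Rightarrow> real^'p"
    and Zs :: "'z set"
    and I :: "nat \<Rightarrow> nat \<Rightarrow> 'a \<Rightarrow> 'k"
    and \<pi> :: "'k \<Rightarrow> real"
  assumes P: "prob_space M"
    and k2: "CARD('k) \<ge> 2"
    and pi_pos: "\<And>t. 0 < \<pi> t \<and> \<pi> t < 1"
    and pi_sum: "(\<Sum>t\<in>UNIV. \<pi> t) = 1"
    and fX_meas: "fX \<in> borel_measurable MW"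
    and fZ_meas: "fZ \<in> measurable MW (count_space UNIV)"
    and Zs_fin: "finite Zs"
    and fZ_Zs: "\<And>w. w \<in> space MW \<Longrightarrow> fZ w \<in> Zs"
    and I_meas: "\<And>n i. i < n \<Longrightarrow> I n i \<in> measurable M (count_space UNIV)"
    (* (C1) *)
    and C1_indep: "prob_space.indep_vars M (\<lambda>_. borel \<Otimes>\<^sub>M MW) (\<lambda>i \<omega>. (Y i \<omega>, W i \<omega>)) UNIV"
    and C1_ident: "\<And>i. distr M (borel \<Otimes>\<^sub>M MW) (\<lambda>\<omega>. (Y i \<omega>, W i \<omega>))
                       = distr M (borel \<Otimes>\<^sub>M MW) (\<lambda>\<omega>. (Y 0 \<omega>, W 0 \<omega>))"
    and C1_mom: "\<And>t. integrable M (\<lambda>\<omega>. (Y 0 \<omega> $ t)\<^sup>2)"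
    (* (C2) *)
    and C2: "\<And>n. cond_indep_disc M
               (\<lambda>\<omega>. restrict (\<lambda>i. I n i \<omega>) {..<n}) (PiM {..<n} (\<lambda>_. count_space UNIV))
               (\<lambda>\<omega>. restrict (\<lambda>i. (Y i \<omega>, W i \<omega>)) {..<n}) (PiM {..<n} (\<lambda>_. borel \<Otimes>\<^sub>M MW))
               (\<lambda>\<omega>. restrict (\<lambda>i. fZ (W i \<omega>)) {..<n})"
    (* (C3) *)
    and C3_prob: "\<And>n i t zz. i < n \<Longrightarrow>
               measure M {\<omega>\<in>space M. I n i \<omega> = t \<and> restrict (\<lambda>j. fZ (W j \<omega>)) {..<n} = zz}
             = \<pi> t * measure M {\<omega>\<in>space M. restrict (\<lambda>j. fZ (W j \<omega>)) {..<n} = zz}"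
    and C3_D: "\<And>z t. z \<in> Zs \<Longrightarrow> conv_in_prob M
               (\<lambda>n \<omega>. (real (card (samp (\<lambda>i. I n i \<omega>) (\<lambda>i. fZ (W i \<omega>)) n t z)) - \<pi> t * real (card {i. i < n \<and> fZ (W i \<omega>) = z}))
                       / real (card {i. i < n \<and> fZ (W i \<omega>) = z}))
               0"
    (* moment conditions *)
    and X_mom: "integrable M (\<lambda>\<omega>. (norm (fX (W 0 \<omega>)))\<^sup>2)"
    and XY_mom: "\<And>l. integrable M (\<lambda>\<omega>. (norm ((Y 0 \<omega> $ l) *\<^sub>R fX (W 0 \<omega>)))\<^sup>2)"
    and var_pd: "\<And>z. z \<in> Zs \<Longrightarrow> posdef (cond_var M (\<lambda>\<omega>. fX (W 0 \<omega>)) (\<lambda>\<omega>. fZ (W 0 \<omega>)) z)"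
  shows "\<forall>z\<in>Zs. \<forall>t.
     conv_in_prob M
       (\<lambda>n \<omega>. betahat_t (\<lambda>i. I n i \<omega>) (\<lambda>i. fZ (W i \<omega>)) (\<lambda>i. fX (W i \<omega>)) (\<lambda>i. Y i \<omega> $ I n i \<omega>) n t z)
       (matrix_inv (cond_var M (\<lambda>\<omega>. fX (W 0 \<omega>)) (\<lambda>\<omega>. fZ (W 0 \<omega>)) z)
          *v cond_cov M (\<lambda>\<omega>. fX (W 0 \<omega>)) (\<lambda>\<omega>. Y 0 \<omega> $ t) (\<lambda>\<omega>. fZ (W 0 \<omega>)) z)
   \<and> conv_in_prob M
       (\<lambda>n \<omega>. betahat (\<lambda>i. I n i \<omega>) (\<lambda>i. fZ (W i \<omega>)) (\<lambda>i. fX (W i \<omega>)) (\<lambda>i. Y i \<omega> $ I n i \<omega>) n z)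
       (\<Sum>l\<in>UNIV. \<pi> l *\<^sub>R (matrix_inv (cond_var M (\<lambda>\<omega>. fX (W 0 \<omega>)) (\<lambda>\<omega>. fZ (W 0 \<omega>)) z)
          *v cond_cov M (\<lambda>\<omega>. fX (W 0 \<omega>)) (\<lambda>\<omega>. Y 0 \<omega> $ l) (\<lambda>\<omega>. fZ (W 0 \<omega>)) z))"
proof -
  interpret prob_space M by (rule P)
  interpret setting M MW Y W fZ fX Zs I \<pi>
    by unfold_locales (use pi_pos pi_sum fX_meas fZ_meas Zs_fin fZ_Zs I_meas C1_indep C1_ident C1_mom C2 C3_D X_mom XY_mom var_pd in auto)
  show ?thesis by (rule main)
qed

end
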